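(* The set $\mathrm{LS}_\lambda(I)$ of maps $f\in C_\lambda(I)$ having the s-limit shadowing property is dense in $C_\lambda(I)$.
   Context: $I=[0,1]$, $\lambda$ Lebesgue measure; $C_\lambda(I)$ is the set of continuous $\lambda$-preserving maps $I\to I$, with the uniform metric. For $\delta>0$, $(x_n)_{n\ge0}\subset I$ is a $\delta$-pseudo orbit of $f$ if $|f(x_n)-x_{n+1}|<\delta$ for all $n$; it is an asymptotic pseudo orbit if $|f(x_n)-x_{n+1}|\to0$; an asymptotic $\delta$-pseudo orbit is both. A point $x$ $\varepsilon$-traces $(y_n)$ if $|f^n(x)-y_n|<\varepsilon$ for all $n\ge0$. $f$ has the s-limit shadowing property if for every $\varepsilon>0$ there is $\delta>0$ such that (1) every $\delta$-pseudo orbit is $\varepsilon$-traced by some point, and (2) for every asymptotic $\delta$-pseudo orbit $(y_n)$ there is $x\in I$ which $\varepsilon$-traces $(y_n)$ and satisfies $\lim_{n\to\infty}|y_n-f^n(x)|=0$. *)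

theory Defs
  imports "HOL-Analysis.Analysis"
begin

text \<open>The unit interval I = [0,1] as a subset of the reals; self-maps of I are
  represented as functions real => real, only their values on I matter.\<close>

abbreviation unitI :: "real set" where "unitI \<equiv> {0..1}"

definition lambda_preserving :: "(real \<Rightarrow> real) \<Rightarrow> bool" where
  "lambda_preserving f \<longleftrightarrow>
     (\<forall>A. A \<in> sets lebesgue \<and> A \<subseteq> unitI \<longrightarrow>
        {x \<in> unitI. f x \<in> A} \<in> sets lebesgue \<and>
        measure lebesgue {x \<in> unitI. f x \<in> A} = measure lebesgue A)"

definition C_lambda :: "(real \<Rightarrow> real) set" where
  "C_lambda = {f. continuous_on unitI f \<and> f ` unitI \<subseteq> unitI \<and> lambda_preserving f}"

definition unif_dist :: "(real \<Rightarrow> real) \<Rightarrow> (real \<Rightarrow> real) \<Rightarrow> real" where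
  "unif_dist f g = (SUP x\<in>unitI. \<bar>f x - g x\<bar>)"

definition pseudo_orbit :: "(real \<Rightarrow> real) \<Rightarrow> real \<Rightarrow> (nat \<Rightarrow> real) \<Rightarrow> bool" where
  "pseudo_orbit f \<delta> y \<longleftrightarrow> (\<forall>n. y n \<in> unitI) \<and> (\<forall>n. \<bar>f (y n) - y (Suc n)\<bar> < \<delta>)"

definition asymptotic_pseudo_orbit :: "(real \<Rightarrow> real) \<Rightarrow> (nat \<Rightarrow> real) \<Rightarrow> bool" where
  "asymptotic_pseudo_orbit f y \<longleftrightarrow> (\<forall>n. y n \<in> unitI) \<and>
     ((\<lambda>n. \<bar>f (y n) - y (Suc n)\<bar>) \<longlonglongrightarrow> 0)"

definition traces :: "(real \<Rightarrow> real) \<Rightarrow> real \<Rightarrow> real \<Rightarrow> (nat \<Rightarrow> real) \<Rightarrow> bool" where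
  "traces f \<epsilon> x y \<longleftrightarrow> (\<forall>n. \<bar>(f ^^ n) x - y n\<bar> < \<epsilon>)"

definition s_limit_shadowing :: "(real \<Rightarrow> real) \<Rightarrow> bool" where
  "s_limit_shadowing f \<longleftrightarrow>
     (\<forall>\<epsilon>>0. \<exists>\<delta>>0.
        (\<forall>y. pseudo_orbit f \<delta> y \<longrightarrow> (\<exists>x\<in>unitI. traces f \<epsilon> x y)) \<and>
        (\<forall>y. pseudo_orbit f \<delta> y \<and> asymptotic_pseudo_orbit f y \<longrightarrow>
           (\<exists>x\<in>unitI. traces f \<epsilon> x y \<and> ((\<lambda>n. \<bar>y n - (f ^^ n) x\<bar>) \<longlonglongrightarrow> 0))))"

definition LS_lambda :: "(real \<Rightarrow> real) set" where
  "LS_lambda = {f \<in> C_lambda. s_limit_shadowing f}"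

end

theory Submission
  imports Defs "HOL-Probability.Distribution_Functions"
begin

definition gridpt :: "nat \<Rightarrow> real \<Rightarrow> bool" where
  "gridpt N v \<longleftrightarrow> (\<exists>k. k \<le> N \<and> v = real k / real N)"

lemma gridpt_flip:
  assumes "N > 0" "gridpt N v" shows "gridpt N (1 - v)"
proof -
  obtain k where k: "k \<le> N" "v = real k / real N" using assms(2) unfolding gridpt_def by auto
  have "1 - v = real (N - k) / real N" using k assms(1) by (simp add: of_nat_diff field_simps)
  then show ?thesis unfolding gridpt_def by (intro exI[of _ "N - k"]) auto
qed

lemma cov_core:
  fixes g :: "real \<Rightarrow> real"
  assumes N: "N > 0"
    and ab: "a \<le> y" "y \<le> b"
    and cont: "continuous_on {a..b} g"
    and mono: "\<And>s t. a \<le> s \<Longrightarrow> s \<le> t \<Longrightarrow> t \<le> b \<Longrightarrow> g s \<le> g t"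
    and exp: "\<And>s t. a \<le> s \<Longrightarrow> s \<le> t \<Longrightarrow> t \<le> b \<Longrightarrow> 2 * (t - s) \<le> g t - g s"
    and ga: "a = y - r \<or> gridpt N (g a)" and gb: "b = y + r \<or> gridpt N (g b)"
    and one: "a = y - r \<or> b = y + r"
    and rng: "0 \<le> g a" "g b \<le> 1"
    and z: "0 \<le> z" "z \<le> 1" "\<bar>z - g y\<bar> \<le> 2 * r"
  shows "(\<exists>x\<in>{a..b}. g x = z) \<or>
         (\<exists>k. 0 < k \<and> k < N \<and> \<bar>z - real k / real N\<bar> \<le> 2 * r \<and>
              (\<exists>x\<in>{a..b}. g x = 2 * (real k / real N) - z))"
proof -
  have ivt: "\<exists>x\<in>{a..b}. g x = v" if "g a \<le> v" "v \<le> g b" for v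
    using IVT'[of g a v b, OF that] ab cont by auto
  have gya: "2 * (y - a) \<le> g y - g a" using exp ab by auto
  have gyb: "2 * (b - y) \<le> g b - g y" using exp ab by auto
  show ?thesis
  proof (cases "g a \<le> z \<and> z \<le> g b")
    case True then show ?thesis using ivt by blast
  next
    case False
    then consider "z > g b" | "z < g a" by linarith
    then show ?thesis
    proof cases
      case 1
      have bne: "b \<noteq> y + r" using 1 gyb z by auto
      then have gr: "gridpt N (g b)" and ar: "a = y - r" using gb one by auto
      obtain k where k: "k \<le> N" "g b = real k / real N" using gr unfolding gridpt_def by auto
      have "real k / real N < 1" using 1 z k by auto
      then have kN: "k < N" using N by (simp add: divide_less_eq)
      have "g b > 0" using 1 z gya gyb ar rng ab by (auto simp: abs_le_iff)
      then have k0: "0 < k" using k by (cases k) auto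
      have m: "g a \<le> 2 * g b - z" "2 * g b - z \<le> g b" using 1 z gya gyb ar ab by (auto simp: abs_le_iff)
      have "\<bar>z - real k / real N\<bar> \<le> 2 * r" using 1 z gyb k ab by (auto simp: abs_le_iff)
      then show ?thesis using ivt[OF m] kN k0 k by (intro disjI2 exI[of _ k]) auto
    next
      case 2
      have ane: "a \<noteq> y - r" using 2 gya z by auto
      then have gr: "gridpt N (g a)" and br: "b = y + r" using ga one by auto
      obtain k where k: "k \<le> N" "g a = real k / real N" using gr unfolding gridpt_def by auto
      have "g a < 1" using 2 z gya gyb br rng ab by (auto simp: abs_le_iff)
      then have kN: "k < N" using N k by (simp add: divide_less_eq)
      have "g a > 0" using 2 z by auto
      then have k0: "0 < k" using k by (cases k) auto
      have m: "g a \<le> 2 * g a - z" "2 * g a - z \<le> g b" using 2 z gya gyb br ab by (auto simp: abs_le_iff)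
      have "\<bar>z - real k / real N\<bar> \<le> 2 * r" using 2 z gya k ab by (auto simp: abs_le_iff)
      then show ?thesis using ivt[OF m] kN k0 k by (intro disjI2 exI[of _ k]) auto
    qed
  qed
qed

definition legs_ok :: "(real \<Rightarrow> real) \<Rightarrow> nat \<Rightarrow> real \<Rightarrow> bool" where
  "legs_ok g N \<gamma> \<longleftrightarrow> (\<forall>y\<in>{0..1}. \<exists>a b. 0 \<le> a \<and> a \<le> y \<and> y \<le> b \<and> b \<le> 1 \<and> \<gamma> \<le> b - a \<and>
      gridpt N (g a) \<and> gridpt N (g b) \<and> continuous_on {a..b} g \<and>
      ((\<forall>s t. a \<le> s \<longrightarrow> s \<le> t \<longrightarrow> t \<le> b \<longrightarrow> g s \<le> g t \<and> 2 * (t - s) \<le> g t - g s) \<or>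
       (\<forall>s t. a \<le> s \<longrightarrow> s \<le> t \<longrightarrow> t \<le> b \<longrightarrow> g t \<le> g s \<and> 2 * (t - s) \<le> g s - g t)))"

lemma cov:
  fixes g :: "real \<Rightarrow> real"
  assumes N: "N > 0" and maps: "\<And>x. x \<in> {0..1} \<Longrightarrow> g x \<in> {0..1}"
    and legs: "legs_ok g N \<gamma>"
    and y: "y \<in> {0..1}" and r: "0 < r" "2 * r \<le> \<gamma>"
    and z: "z \<in> {0..1}" "\<bar>z - g y\<bar> \<le> 2 * r"
  shows "(\<exists>x\<in>{0..1}. \<bar>x - y\<bar> \<le> r \<and> g x = z) \<or>
         (\<exists>k. 0 < k \<and> k < N \<and> \<bar>z - real k / real N\<bar> \<le> 2 * r \<and>
              (\<exists>x\<in>{0..1}. \<bar>x - y\<bar> \<le> r \<and> g x = 2 * (real k / real N) - z))"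
proof -
  obtain a b where ab: "0 \<le> a" "a \<le> y" "y \<le> b" "b \<le> 1" "\<gamma> \<le> b - a"
      "gridpt N (g a)" "gridpt N (g b)" "continuous_on {a..b} g"
      and mono: "(\<forall>s t. a \<le> s \<longrightarrow> s \<le> t \<longrightarrow> t \<le> b \<longrightarrow> g s \<le> g t \<and> 2 * (t - s) \<le> g t - g s) \<or>
       (\<forall>s t. a \<le> s \<longrightarrow> s \<le> t \<longrightarrow> t \<le> b \<longrightarrow> g t \<le> g s \<and> 2 * (t - s) \<le> g s - g t)"
    using legs y unfolding legs_ok_def by blast
  define a' where "a' = max a (y - r)"
  define b' where "b' = min b (y + r)"
  have a'b': "a \<le> a'" "a' \<le> y" "y \<le> b'" "b' \<le> b" using ab r unfolding a'_def b'_def by auto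
  have ga: "a' = y - r \<or> a' = a" and gb: "b' = y + r \<or> b' = b" unfolding a'_def b'_def by auto
  have one: "a' = y - r \<or> b' = y + r" using ab r unfolding a'_def b'_def by auto
  have cont: "continuous_on {a'..b'} g" using ab(8) by (rule continuous_on_subset) (use a'b' in auto)
  have sub: "{a'..b'} \<subseteq> {0..1}" "\<And>x. x \<in> {a'..b'} \<Longrightarrow> \<bar>x - y\<bar> \<le> r"
    using a'b' ab unfolding a'_def b'_def by auto
  have ga': "a' = y - r \<or> gridpt N (g a')" using ga ab by auto
  have gb': "b' = y + r \<or> gridpt N (g b')" using gb ab by auto
  have ina: "a' \<in> {0..1}" "b' \<in> {0..1}" using a'b' ab by auto
  have transfer: "?thesis" if h: "(\<exists>x\<in>{a'..b'}. g x = z) \<or>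
         (\<exists>k. 0 < k \<and> k < N \<and> \<bar>z - real k / real N\<bar> \<le> 2 * r \<and>
              (\<exists>x\<in>{a'..b'}. g x = 2 * (real k / real N) - z))"
    using h
  proof
    assume "\<exists>x\<in>{a'..b'}. g x = z"
    then obtain x where x: "x \<in> {a'..b'}" "g x = z" by blast
    show ?thesis using sub[OF ] x by (intro disjI1 bexI[of _ x]) auto
  next
    assume "\<exists>k. 0 < k \<and> k < N \<and> \<bar>z - real k / real N\<bar> \<le> 2 * r \<and>
              (\<exists>x\<in>{a'..b'}. g x = 2 * (real k / real N) - z)"
    then obtain k x where k: "0 < k" "k < N" "\<bar>z - real k / real N\<bar> \<le> 2 * r"
       "x \<in> {a'..b'}" "g x = 2 * (real k / real N) - z" by blast
    have "x \<in> {0..1}" "\<bar>x - y\<bar> \<le> r" using sub k(4) by auto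
    then show ?thesis using k by (intro disjI2 exI[of _ k]) auto
  qed
  from mono show ?thesis
  proof
    assume m: "\<forall>s t. a \<le> s \<longrightarrow> s \<le> t \<longrightarrow> t \<le> b \<longrightarrow> g s \<le> g t \<and> 2 * (t - s) \<le> g t - g s"
    show ?thesis
      apply (rule transfer, rule cov_core[OF N a'b'(2,3) cont _ _ ga' gb' one])
      using m a'b' maps[OF ina(1)] maps[OF ina(2)] z by auto
  next
    assume m: "\<forall>s t. a \<le> s \<longrightarrow> s \<le> t \<longrightarrow> t \<le> b \<longrightarrow> g t \<le> g s \<and> 2 * (t - s) \<le> g s - g t"
    have cont': "continuous_on {a'..b'} (\<lambda>x. 1 - g x)" by (intro continuous_intros cont)
    have ga'': "a' = y - r \<or> gridpt N (1 - g a')" using ga' gridpt_flip[OF N] by auto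
    have gb'': "b' = y + r \<or> gridpt N (1 - g b')" using gb' gridpt_flip[OF N] by auto
    have "(\<exists>x\<in>{a'..b'}. 1 - g x = 1 - z) \<or>
         (\<exists>k. 0 < k \<and> k < N \<and> \<bar>(1 - z) - real k / real N\<bar> \<le> 2 * r \<and>
              (\<exists>x\<in>{a'..b'}. 1 - g x = 2 * (real k / real N) - (1 - z)))"
      apply (rule cov_core[OF N a'b'(2,3) cont' _ _ ga'' gb'' one])
      using m a'b' maps[OF ina(1)] maps[OF ina(2)] z by auto
    then show ?thesis
    proof
      assume "\<exists>x\<in>{a'..b'}. 1 - g x = 1 - z" then show ?thesis by (intro transfer) auto
    next
      assume "\<exists>k. 0 < k \<and> k < N \<and> \<bar>(1 - z) - real k / real N\<bar> \<le> 2 * r \<and>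
              (\<exists>x\<in>{a'..b'}. 1 - g x = 2 * (real k / real N) - (1 - z))"
      then obtain k x where k: "0 < k" "k < N" "\<bar>(1 - z) - real k / real N\<bar> \<le> 2 * r"
        "x \<in> {a'..b'}" "1 - g x = 2 * (real k / real N) - (1 - z)" by blast
      have e: "real (N - k) / real N = 1 - real k / real N" using k N by (simp add: of_nat_diff field_simps)
      have "g x = 2 * (real (N - k) / real N) - z" "\<bar>z - real (N - k) / real N\<bar> \<le> 2 * r"
        using k e by (auto simp: abs_le_iff)
      then show ?thesis using k by (intro transfer disjI2 exI[of _ "N - k"]) auto
    qed
  qed
qed


definition fold_ok :: "(real \<Rightarrow> real) \<Rightarrow> nat \<Rightarrow> real \<Rightarrow> bool" where
  "fold_ok g N w \<longleftrightarrow> (\<forall>k. 0 < k \<and> k < N \<longrightarrow> (\<forall>x\<in>{0..1}. \<bar>x - real k / real N\<bar> \<le> w \<longrightarrow>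
      2 * (real k / real N) - x \<in> {0..1} \<and> g (2 * (real k / real N) - x) = g x))"

fun Bnd :: "(nat \<Rightarrow> real) \<Rightarrow> nat \<Rightarrow> real" where
  "Bnd r 0 = r 0"
| "Bnd r (Suc k) = r (Suc k) + 4 * r k"

lemma Bnd_shift:
  assumes "\<And>k. 0 \<le> r k" shows "Bnd (\<lambda>k. r (Suc k)) j \<le> Bnd r (Suc j)"
  using assms by (cases j) auto

lemma backward:
  fixes g :: "real \<Rightarrow> real"
  assumes N: "N > 0" and maps: "\<And>x. x \<in> {0..1} \<Longrightarrow> g x \<in> {0..1}"
    and legs: "legs_ok g N \<gamma>" and fold: "fold_ok g N w"
    and rho: "2 * \<rho> \<le> \<gamma>" "2 * \<rho> \<le> w"
  shows "(\<forall>k\<le>n. y k \<in> {0..1} \<and> 0 < r k \<and> r k \<le> \<rho>) \<Longrightarrow>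
         (\<forall>k<n. r (Suc k) + \<bar>g (y k) - y (Suc k)\<bar> \<le> 2 * r k) \<Longrightarrow>
         \<exists>x\<in>{0..1}. \<forall>k\<le>n. \<bar>(g^^k) x - y k\<bar> \<le> Bnd r k"
proof (induction n arbitrary: y r)
  case 0 then show ?case by (intro bexI[of _ "y 0"]) auto
next
  case (Suc n)
  have "\<exists>x\<in>{0..1}. \<forall>k\<le>n. \<bar>(g^^k) x - y (Suc k)\<bar> \<le> Bnd (\<lambda>k. r (Suc k)) k"
    using Suc.IH[of "\<lambda>k. y (Suc k)" "\<lambda>k. r (Suc k)"] Suc.prems by auto
  then obtain x' where x': "x' \<in> {0..1}" "\<forall>k\<le>n. \<bar>(g^^k) x' - y (Suc k)\<bar> \<le> Bnd (\<lambda>k. r (Suc k)) k"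
    by blast
  have x'1: "\<bar>x' - y 1\<bar> \<le> r 1" using x'(2)[rule_format, of 0] by simp
  have c0: "r 1 + \<bar>g (y 0) - y 1\<bar> \<le> 2 * r 0" using Suc.prems(2)[rule_format, of 0] by simp
  have xg: "\<bar>x' - g (y 0)\<bar> \<le> 2 * r 0" using x'1 c0 by (auto simp: abs_le_iff)
  have y0: "y 0 \<in> {0..1}" "0 < r 0" "r 0 \<le> \<rho>" using Suc.prems(1) by auto
  have rpos: "\<And>k. k \<le> Suc n \<Longrightarrow> 0 < r k" using Suc.prems(1) by auto
  have shift: "Bnd (\<lambda>k. r (Suc k)) j \<le> Bnd r (Suc j)" if "j \<le> n" for j
    using that rpos[of 0] rpos[of j] by (cases j) auto
  from cov[OF N maps legs y0(1) y0(2) _ x'(1) xg] rho y0(3)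
  have "(\<exists>x\<in>{0..1}. \<bar>x - y 0\<bar> \<le> r 0 \<and> g x = x') \<or>
         (\<exists>k. 0 < k \<and> k < N \<and> \<bar>x' - real k / real N\<bar> \<le> 2 * r 0 \<and>
              (\<exists>x\<in>{0..1}. \<bar>x - y 0\<bar> \<le> r 0 \<and> g x = 2 * (real k / real N) - x'))" by auto
  then show ?case
  proof
    assume "\<exists>x\<in>{0..1}. \<bar>x - y 0\<bar> \<le> r 0 \<and> g x = x'"
    then obtain x where x: "x \<in> {0..1}" "\<bar>x - y 0\<bar> \<le> r 0" "g x = x'" by blast
    have "\<bar>(g^^k) x - y k\<bar> \<le> Bnd r k" if "k \<le> Suc n" for k
    proof (cases k)
      case 0 then show ?thesis using x by simp
    next
      case (Suc j)
      have "(g^^k) x = (g^^j) x'" using Suc x(3) by (simp add: funpow_Suc_right del: funpow.simps)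
      then show ?thesis using x'(2)[rule_format, of j] shift[of j] Suc that by auto
    qed
    then show ?thesis using x(1) by blast
  next
    assume "\<exists>k. 0 < k \<and> k < N \<and> \<bar>x' - real k / real N\<bar> \<le> 2 * r 0 \<and>
              (\<exists>x\<in>{0..1}. \<bar>x - y 0\<bar> \<le> r 0 \<and> g x = 2 * (real k / real N) - x')"
    then obtain kk x where kk: "0 < kk" "kk < N" "\<bar>x' - real kk / real N\<bar> \<le> 2 * r 0"
      and x: "x \<in> {0..1}" "\<bar>x - y 0\<bar> \<le> r 0" "g x = 2 * (real kk / real N) - x'" by blast
    have "\<bar>x' - real kk / real N\<bar> \<le> w" using kk(3) y0 rho by auto
    then have gm: "g (2 * (real kk / real N) - x') = g x'" using fold kk x'(1) unfolding fold_ok_def by blast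
    have "\<bar>(g^^k) x - y k\<bar> \<le> Bnd r k" if "k \<le> Suc n" for k
    proof (cases k)
      case 0 then show ?thesis using x by simp
    next
      case (Suc j)
      show ?thesis
      proof (cases j)
        case 0
        have "(g^^k) x = 2 * (real kk / real N) - x'" using Suc 0 x(3) by simp
        then show ?thesis using Suc 0 kk(3) x'1 by (auto simp: abs_le_iff)
      next
        case (Suc i)
        have "(g^^k) x = (g^^i) (g (g x))" using \<open>k = Suc j\<close> Suc
          by (simp add: funpow_Suc_right del: funpow.simps)
        also have "\<dots> = (g^^i) (g x')" using x(3) gm by simp
        also have "\<dots> = (g^^j) x'" using Suc by (simp add: funpow_Suc_right del: funpow.simps)
        finally show ?thesis using x'(2)[rule_format, of j] shift[of j] \<open>k = Suc j\<close> that by auto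
      qed
    qed
    then show ?thesis using x(1) by blast
  qed
qed

lemma funpow_cont:
  fixes g :: "real \<Rightarrow> real"
  assumes cont: "continuous_on {0..1} g" and maps: "\<And>x. x \<in> {0..1} \<Longrightarrow> g x \<in> {0..1}"
  shows "continuous_on {0..1} (g^^k) \<and> (\<forall>x\<in>{0..1}. (g^^k) x \<in> {0..1})"
proof (induction k)
  case 0 then show ?case by (simp add: continuous_on_id)
next
  case (Suc k)
  have "continuous_on {0..1} (g \<circ> (g^^k))"
    by (rule continuous_on_compose) (use Suc cont in \<open>auto intro: continuous_on_subset\<close>)
  then show ?case using Suc maps by auto
qed

lemma forward_inf:
  fixes g :: "real \<Rightarrow> real"
  assumes cont: "continuous_on {0..1} g"
    and N: "N > 0" and maps: "\<And>x. x \<in> {0..1} \<Longrightarrow> g x \<in> {0..1}"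
    and legs: "legs_ok g N \<gamma>" and fold: "fold_ok g N w"
    and rho: "2 * \<rho> \<le> \<gamma>" "2 * \<rho> \<le> w"
    and yr: "\<And>k. y k \<in> {0..1} \<and> 0 < r k \<and> r k \<le> \<rho>"
    and cond: "\<And>k. r (Suc k) + \<bar>g (y k) - y (Suc k)\<bar> \<le> 2 * r k"
  shows "\<exists>x\<in>{0..1}. \<forall>k. \<bar>(g^^k) x - y k\<bar> \<le> Bnd r k"
proof -
  define C where "C k = {x\<in>{0..1}. \<bar>(g^^k) x - y k\<bar> \<le> Bnd r k}" for k
  define K where "K n = {0..1} \<inter> (\<Inter>k\<in>{..n}. C k)" for n
  have Ceq: "C k = {0..1} \<inter> (g^^k) -` {y k - Bnd r k .. y k + Bnd r k}" for k
    unfolding C_def by (auto simp: abs_le_iff)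
  have closedC: "closed (C k)" for k
    unfolding Ceq using funpow_cont[OF cont maps, of k] by (intro continuous_closed_preimage) auto
  have compK: "compact (K n)" for n
    unfolding K_def by (intro compact_Int_closed compact_Icc closed_INT) (use closedC in auto)
  have neK: "K n \<noteq> {}" for n
  proof -
    obtain x where "x \<in> {0..1}" "\<forall>k\<le>n. \<bar>(g^^k) x - y k\<bar> \<le> Bnd r k"
      using backward[OF N maps legs fold rho, of n y r] yr cond by blast
    then have "x \<in> K n" unfolding K_def C_def by auto
    then show ?thesis by auto
  qed
  have decK: "K n \<subseteq> K m" if "m \<le> n" for m n using that unfolding K_def by auto
  have "\<Inter> (range K) \<noteq> {}" by (rule compact_nest[OF compK neK decK])
  then obtain x where x: "\<And>n. x \<in> K n" by blast
  show ?thesis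
  proof (intro bexI[of _ x] allI)
    fix k show "\<bar>(g^^k) x - y k\<bar> \<le> Bnd r k" using x[of k] unfolding K_def C_def by auto
  next
    show "x \<in> {0..1}" using x[of 0] unfolding K_def by auto
  qed
qed


lemma shadowing_thm:
  fixes g :: "real \<Rightarrow> real"
  assumes cont: "continuous_on {0..1} g"
    and N: "N > 0" and maps: "\<And>x. x \<in> {0..1} \<Longrightarrow> g x \<in> {0..1}"
    and legs: "legs_ok g N \<gamma>" and fold: "fold_ok g N w"
    and pos: "0 < \<gamma>" "0 < w"
  shows "s_limit_shadowing g"
  unfolding s_limit_shadowing_def
proof (intro allI impI)
  fix \<epsilon> :: real assume \<epsilon>: "\<epsilon> > 0"
  define \<rho> where "\<rho> = min (\<gamma>/2) (w/2)"
  define r where "r = min \<rho> (\<epsilon>/6)"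
  have rho: "2 * \<rho> \<le> \<gamma>" "2 * \<rho> \<le> w" unfolding \<rho>_def by auto
  have r: "0 < r" "r \<le> \<rho>" "5 * r < \<epsilon>" using pos \<epsilon> unfolding r_def \<rho>_def by auto
  have part1: "\<exists>x\<in>{0..1}. traces g \<epsilon> x y" if po: "pseudo_orbit g r y" for y
  proof -
    have yr: "y k \<in> {0..1} \<and> 0 < (\<lambda>_. r) k \<and> (\<lambda>_. r) k \<le> \<rho>" for k
      using po r unfolding pseudo_orbit_def by auto
    have cond: "(\<lambda>_. r) (Suc k) + \<bar>g (y k) - y (Suc k)\<bar> \<le> 2 * (\<lambda>_. r) k" for k
      using po unfolding pseudo_orbit_def by (auto simp: less_imp_le[of _ r])
    obtain x where x: "x \<in> {0..1}" "\<forall>k. \<bar>(g^^k) x - y k\<bar> \<le> Bnd (\<lambda>_. r) k"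
      using forward_inf[OF cont N maps legs fold rho, of y "\<lambda>_. r"] yr cond by blast
    have "Bnd (\<lambda>_. r) k < \<epsilon>" for k using r by (cases k) auto
    then show ?thesis using x unfolding traces_def by (intro bexI[of _ x]) (auto intro: le_less_trans)
  qed
  have part2: "\<exists>x\<in>{0..1}. traces g \<epsilon> x y \<and> (\<lambda>n. \<bar>y n - (g ^^ n) x\<bar>) \<longlonglongrightarrow> 0"
    if po: "pseudo_orbit g r y" and apo: "asymptotic_pseudo_orbit g y" for y
  proof -
    define d where "d k = \<bar>g (y k) - y (Suc k)\<bar>" for k
    have dr: "d k < r" for k using po unfolding pseudo_orbit_def d_def by auto
    have d0: "d \<longlonglongrightarrow> 0" using apo unfolding asymptotic_pseudo_orbit_def d_def by auto
    have dnn: "0 \<le> d k" for k unfolding d_def by auto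
    define e where "e k = (SUP j\<in>{k..}. d j)" for k
    have bdd: "bdd_above (d ` {k..})" for k using dr by (intro bdd_aboveI[of _ r]) (auto intro: less_imp_le)
    have de: "d j \<le> e k" if "k \<le> j" for j k unfolding e_def using that bdd by (intro cSUP_upper) auto
    have er: "e k \<le> r" for k unfolding e_def using dr by (intro cSUP_least) (auto intro: less_imp_le)
    have emono: "e (Suc k) \<le> e k" for k unfolding e_def
      by (rule cSUP_subset_mono) (use bdd in auto)
    have e0: "e \<longlonglongrightarrow> 0"
    proof (rule LIMSEQ_I)
      fix \<eta> :: real assume \<eta>: "0 < \<eta>"
      obtain K where K: "\<And>j. j \<ge> K \<Longrightarrow> norm (d j - 0) < \<eta>/2"
        using LIMSEQ_D[OF d0, of "\<eta>/2"] \<eta> by auto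
      have "norm (e k - 0) < \<eta>" if "k \<ge> K" for k
      proof -
        have "d j \<le> \<eta>/2" if "j \<ge> K" for j using K[OF that] dnn[of j] by auto
        then have "e k \<le> \<eta>/2" unfolding e_def using that by (intro cSUP_least) auto
        moreover have "0 \<le> e k" using de[of k k] dnn[of k] by auto
        ultimately show ?thesis using \<eta> by auto
      qed
      then show "\<exists>no. \<forall>k\<ge>no. norm (e k - 0) < \<eta>" by blast
    qed
    define rr where "rr k = max (r / 2^k) (e k)" for k
    have rrpos: "0 < rr k" for k
    proof -
      have "0 < r / 2^k" using r by simp
      then show ?thesis unfolding rr_def by (simp add: less_max_iff_disj)
    qed
    have rrle: "rr k \<le> r" for k unfolding rr_def using r er[of k]
      by (auto simp: max_def divide_le_eq)
    have rrmono: "rr (Suc k) \<le> rr k" for k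
    proof -
      have "r / 2^(Suc k) \<le> r / 2^k" using r by (simp add: divide_le_eq)
      then show ?thesis unfolding rr_def using emono[of k] by (rule max.mono)
    qed
    have rrd: "d k \<le> rr k" for k unfolding rr_def using de[of k k] by auto
    have yr: "y k \<in> {0..1} \<and> 0 < rr k \<and> rr k \<le> \<rho>" for k
      using po rrpos[of k] rrle[of k] r unfolding pseudo_orbit_def by auto
    have cond: "rr (Suc k) + \<bar>g (y k) - y (Suc k)\<bar> \<le> 2 * rr k" for k
      using rrmono[of k] rrd[of k] unfolding d_def by auto
    obtain x where x: "x \<in> {0..1}" "\<forall>k. \<bar>(g^^k) x - y k\<bar> \<le> Bnd rr k"
      using forward_inf[OF cont N maps legs fold rho, of y rr] yr cond by blast
    have "Bnd rr k < \<epsilon>" for k using r rrle[of k] rrle[of "k - 1"] by (cases k) auto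
    then have tr: "traces g \<epsilon> x y" using x unfolding traces_def by (auto intro: le_less_trans)
    have r2: "(\<lambda>k. r / 2^k) \<longlonglongrightarrow> 0"
      by (intro LIMSEQ_divide_realpow_zero) auto
    have rr0: "rr \<longlonglongrightarrow> 0" unfolding rr_def using tendsto_max[OF r2 e0] by simp
    have b0: "(\<lambda>k. 5 * rr k) \<longlonglongrightarrow> 0" using tendsto_mult[OF tendsto_const rr0, of 5] by simp
    have "(\<lambda>k. \<bar>y (Suc k) - (g ^^ (Suc k)) x\<bar>) \<longlonglongrightarrow> 0"
    proof (rule Lim_null_comparison[OF _ b0])
      show "\<forall>\<^sub>F k in sequentially. norm \<bar>y (Suc k) - (g ^^ Suc k) x\<bar> \<le> 5 * rr k"
      proof (intro always_eventually allI)
        fix k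
        have "\<bar>(g ^^ Suc k) x - y (Suc k)\<bar> \<le> rr (Suc k) + 4 * rr k" using x(2)[rule_format, of "Suc k"] by simp
        then show "norm \<bar>y (Suc k) - (g ^^ Suc k) x\<bar> \<le> 5 * rr k" using rrmono[of k] by auto
      qed
    qed
    then have "(\<lambda>n. \<bar>y n - (g ^^ n) x\<bar>) \<longlonglongrightarrow> 0" by (rule LIMSEQ_imp_Suc)
    then show ?thesis using tr x(1) by blast
  qed
  show "\<exists>\<delta>>0. (\<forall>y. pseudo_orbit g \<delta> y \<longrightarrow> (\<exists>x\<in>unitI. traces g \<epsilon> x y)) \<and>
        (\<forall>y. pseudo_orbit g \<delta> y \<and> asymptotic_pseudo_orbit g y \<longrightarrow>
           (\<exists>x\<in>unitI. traces g \<epsilon> x y \<and> (\<lambda>n. \<bar>y n - (g ^^ n) x\<bar>) \<longlonglongrightarrow> 0))"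
    using part1 part2 r(1) by blast
qed

definition cl :: "real \<Rightarrow> real" where "cl x = max 0 (min 1 x)"

lemma cl_cont: "continuous_on S cl" unfolding cl_def by (intro continuous_intros)
lemma cl_mono: "x \<le> y \<Longrightarrow> cl x \<le> cl y" unfolding cl_def by auto
lemma cl_range: "0 \<le> cl x" "cl x \<le> 1" unfolding cl_def by auto

lemma cl_sum:
  assumes "A \<le> B"
  shows "(\<Sum>k\<in>{A..<B}. cl (x - real k)) = max 0 (min (real B - real A) (x - real A))"
  using assms
proof (induction B)
  case 0 then show ?case by simp
next
  case (Suc B)
  show ?case
  proof (cases "A = Suc B")
    case True then show ?thesis by simp
  next
    case False
    then have AB: "A \<le> B" using Suc.prems by simp
    have "(\<Sum>k\<in>{A..<Suc B}. cl (x - real k)) = (\<Sum>k\<in>{A..<B}. cl (x - real k)) + cl (x - real B)"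
      using AB by simp
    also have "\<dots> = max 0 (min (real B - real A) (x - real A)) + cl (x - real B)" using Suc.IH AB by simp
    also have "\<dots> = max 0 (min (real (Suc B) - real A) (x - real A))"
      using AB unfolding cl_def by (auto simp: max_def min_def)
    finally show ?thesis .
  qed
qed

definition phi :: "nat \<Rightarrow> (nat \<Rightarrow> real) \<Rightarrow> nat \<Rightarrow> nat \<Rightarrow> real \<Rightarrow> real" where
  "phi N c A B v = (\<Sum>k\<in>{A..<B}. c k * cl (real N * v - real k))"

definition psi :: "nat \<Rightarrow> (nat \<Rightarrow> real) \<Rightarrow> nat \<Rightarrow> nat \<Rightarrow> real \<Rightarrow> real" where
  "psi N c A B \<tau> = (THE v. v \<in> {real A / real N .. real B / real N} \<and> phi N c A B v = \<tau>)"

locale leg =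
  fixes N :: nat and c :: "nat \<Rightarrow> real" and A B :: nat
  assumes N: "N > 0" and AB: "A \<le> B"
    and cpos: "\<And>k. A \<le> k \<Longrightarrow> k < B \<Longrightarrow> 0 < c k"
    and cle: "\<And>k. A \<le> k \<Longrightarrow> k < B \<Longrightarrow> c k \<le> 1 / (2 * real N)"
begin

abbreviation "ph \<equiv> phi N c A B"
abbreviation "ps \<equiv> psi N c A B"
definition "L = (\<Sum>k\<in>{A..<B}. c k)"
abbreviation "lo \<equiv> real A / real N"
abbreviation "hi \<equiv> real B / real N"

lemma lohi: "lo \<le> hi" using AB by (simp add: divide_right_mono)

lemma L_nonneg: "0 \<le> L" unfolding L_def using cpos by (intro sum_nonneg) (auto intro: less_imp_le)

lemma ph_mono: "u \<le> v \<Longrightarrow> ph u \<le> ph v"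
  unfolding phi_def using cpos N
  by (intro sum_mono mult_left_mono cl_mono) (auto intro: less_imp_le mult_left_mono)

lemma ph_lip: assumes "u \<le> v" shows "ph v - ph u \<le> (v - u) / 2"
proof -
  have "ph v - ph u = (\<Sum>k\<in>{A..<B}. c k * (cl (real N * v - real k) - cl (real N * u - real k)))"
    unfolding phi_def by (simp add: sum_subtractf right_diff_distrib)
  also have "\<dots> \<le> (\<Sum>k\<in>{A..<B}. (1 / (2 * real N)) * (cl (real N * v - real k) - cl (real N * u - real k)))"
  proof (rule sum_mono)
    fix k assume k: "k \<in> {A..<B}"
    have "0 \<le> cl (real N * v - real k) - cl (real N * u - real k)"
      using assms N by (auto intro!: cl_mono mult_left_mono)
    then show "c k * (cl (real N * v - real k) - cl (real N * u - real k))
        \<le> 1 / (2 * real N) * (cl (real N * v - real k) - cl (real N * u - real k))"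
      using cle[of k] k by (intro mult_right_mono) auto
  qed
  also have "\<dots> = (1 / (2 * real N)) * ((\<Sum>k\<in>{A..<B}. cl (real N * v - real k)) - (\<Sum>k\<in>{A..<B}. cl (real N * u - real k)))"
    by (simp add: sum_distrib_left sum_subtractf right_diff_distrib)
  also have "\<dots> = (1 / (2 * real N)) * (max 0 (min (real B - real A) (real N * v - real A)) - max 0 (min (real B - real A) (real N * u - real A)))"
    using cl_sum[OF AB] by simp
  also have "\<dots> \<le> (1 / (2 * real N)) * (real N * v - real N * u)"
  proof (intro mult_left_mono)
    have "real N * u \<le> real N * v" using assms N by (simp add: mult_left_mono)
    then show "max 0 (min (real B - real A) (real N * v - real A)) - max 0 (min (real B - real A) (real N * u - real A))
        \<le> real N * v - real N * u" by (simp add: max_def min_def)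
  qed simp
  also have "\<dots> = (v - u) / 2" using N by (simp add: field_simps)
  finally show ?thesis .
qed

lemma ph_low: assumes "v \<le> lo" shows "ph v = 0"
proof -
  have "cl (real N * v - real k) = 0" if "A \<le> k" for k
  proof -
    have "real N * v \<le> real A" using assms N by (simp add: field_simps)
    then show ?thesis using that unfolding cl_def by auto
  qed
  then show ?thesis unfolding phi_def by simp
qed

lemma ph_high: assumes "hi \<le> v" shows "ph v = L"
proof -
  have "cl (real N * v - real k) = 1" if "k < B" for k
  proof -
    have "real B \<le> real N * v" using assms N by (simp add: field_simps)
    then show ?thesis using that unfolding cl_def by auto
  qed
  then show ?thesis unfolding phi_def L_def by simp
qed

lemma ph_cont: "continuous_on S ph"
  unfolding phi_def by (intro continuous_intros continuous_on_compose2[OF cl_cont[of UNIV]]) auto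

lemma ph_strict: assumes "lo \<le> u" "u < v" "v \<le> hi" shows "ph u < ph v"
proof -
  define k0 where "k0 = nat \<lfloor>real N * u\<rfloor>"
  have Nu0: "real A \<le> real N * u" "real N * v \<le> real B" using assms N by (auto simp: field_simps)
  have Nu2: "real N * u < real N * v" using assms N by simp
  have Nu: "real A \<le> real N * u" "real N * u < real B" "real N * u < real N * v"
    using Nu0 Nu2 by auto
  have nn: "0 \<le> real N * u" using Nu(1) by (meson of_nat_0_le_iff order_trans)
  have k0e: "real k0 = of_int \<lfloor>real N * u\<rfloor>" unfolding k0_def using nn by simp
  have fl: "real k0 \<le> real N * u" "real N * u < real k0 + 1" "0 \<le> real N * u"
    unfolding k0e using nn by (auto simp: of_int_floor_le)
  have k0: "A \<le> k0" "k0 < B" using Nu fl by linarith+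
  show ?thesis unfolding phi_def
  proof (rule sum_strict_mono_ex1)
    show "\<forall>k\<in>{A..<B}. c k * cl (real N * u - real k) \<le> c k * cl (real N * v - real k)"
      using cpos Nu by (auto intro!: mult_left_mono cl_mono simp: less_imp_le)
    have "cl (real N * u - real k0) < cl (real N * v - real k0)"
      using fl Nu unfolding cl_def by (auto simp: max_def min_def)
    then show "\<exists>k\<in>{A..<B}. c k * cl (real N * u - real k) < c k * cl (real N * v - real k)"
      using k0 cpos[OF k0] by (intro bexI[of _ k0]) auto
  qed simp
qed

lemma ph_lo: "ph lo = 0" by (rule ph_low) simp
lemma ph_hi: "ph hi = L" by (rule ph_high) simp

lemma ex_inv: assumes "\<tau> \<in> {0..L}" shows "\<exists>!v. v \<in> {lo..hi} \<and> ph v = \<tau>"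
proof -
  have "\<exists>v\<ge>lo. v \<le> hi \<and> ph v = \<tau>"
    using assms lohi by (intro IVT') (auto simp: ph_lo ph_hi ph_cont)
  moreover have "v = v'" if "v \<in> {lo..hi}" "ph v = \<tau>" "v' \<in> {lo..hi}" "ph v' = \<tau>" for v v'
    using ph_strict[of v v'] ph_strict[of v' v] that by (cases v v' rule: linorder_cases) auto
  ultimately show ?thesis by (metis atLeastAtMost_iff)
qed

lemma ps: assumes "\<tau> \<in> {0..L}" shows "ps \<tau> \<in> {lo..hi}" "ph (ps \<tau>) = \<tau>"
  using theI'[OF ex_inv[OF assms]] unfolding psi_def by auto

lemma ps_ph: assumes "v \<in> {lo..hi}" shows "ps (ph v) = v"
proof -
  have "ph v \<in> {0..L}" using assms ph_mono[of lo v] ph_mono[of v hi] by (auto simp: ph_lo ph_hi)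
  then show ?thesis using ex_inv ps assms by blast
qed

lemma ps0: "ps 0 = lo" using ps_ph[of lo] lohi by (simp add: ph_lo)
lemma psL: "ps L = hi" using ps_ph[of hi] lohi by (simp add: ph_hi)

lemma ps_exp: assumes "\<tau> \<in> {0..L}" "\<sigma> \<in> {0..L}" "\<tau> \<le> \<sigma>"
  shows "ps \<tau> \<le> ps \<sigma>" "2 * (\<sigma> - \<tau>) \<le> ps \<sigma> - ps \<tau>"
proof -
  show le: "ps \<tau> \<le> ps \<sigma>"
  proof (rule ccontr)
    assume "\<not> ps \<tau> \<le> ps \<sigma>"
    then have "ph (ps \<sigma>) < ph (ps \<tau>)" using ps[OF assms(1)] ps[OF assms(2)] by (intro ph_strict) auto
    then show False using ps[OF assms(1)] ps[OF assms(2)] assms by auto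
  qed
  show "2 * (\<sigma> - \<tau>) \<le> ps \<sigma> - ps \<tau>"
    using ph_lip[OF le] ps[OF assms(1)] ps[OF assms(2)] by auto
qed

lemma ps_cont: "continuous_on {0..L} ps"
proof -
  have img: "ph ` {lo..hi} = {0..L}"
  proof
    show "ph ` {lo..hi} \<subseteq> {0..L}" using ph_mono ph_lo ph_hi
      by (auto, metis ph_lo ph_mono, metis ph_hi ph_mono)
    show "{0..L} \<subseteq> ph ` {lo..hi}"
    proof
      fix x assume "x \<in> {0..L}"
      then show "x \<in> ph ` {lo..hi}" using ps[of x] by (intro image_eqI[where x="ps x"]) auto
    qed
  qed
  have "continuous_on (ph ` {lo..hi}) ps"
    by (rule continuous_on_inv) (auto simp: ph_cont ps_ph)
  then show ?thesis using img by simp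
qed

lemma ps_le_iff: assumes "\<tau> \<in> {0..L}" "a \<in> {lo..hi}" shows "ps \<tau> \<le> a \<longleftrightarrow> \<tau> \<le> ph a"
proof
  assume "ps \<tau> \<le> a" then show "\<tau> \<le> ph a" using ph_mono ps[OF assms(1)] by metis
next
  assume h: "\<tau> \<le> ph a"
  show "ps \<tau> \<le> a"
  proof (rule ccontr)
    assume "\<not> ps \<tau> \<le> a"
    then have "ph a < ph (ps \<tau>)" using ps[OF assms(1)] assms(2) by (intro ph_strict) auto
    then show False using h ps[OF assms(1)] by auto
  qed
qed

lemma ps_range: "\<tau> \<in> {0..L} \<Longrightarrow> lo \<le> ps \<tau> \<and> ps \<tau> \<le> hi" using ps by auto

lemma leg_meas_up:
  assumes G: "\<And>x. x \<in> {p..p+L} \<Longrightarrow> G x = ps (x - p)"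
  shows "measure lebesgue {x\<in>{p..p+L}. G x \<le> a} = ph a"
proof -
  have rg: "lo \<le> G x \<and> G x \<le> hi" if "x \<in> {p..p+L}" for x
    using G[OF that] ps_range that by auto
  consider "a < lo" | "hi < a" | "a \<in> {lo..hi}" by force
  then show ?thesis
  proof cases
    case 1
    have e: "{x\<in>{p..p+L}. G x \<le> a} = {}" using rg 1 by force
    show ?thesis unfolding e using ph_low[of a] 1 by simp
  next
    case 2
    have e: "{x\<in>{p..p+L}. G x \<le> a} = {p..p+L}" using rg 2 by force
    show ?thesis unfolding e using ph_high[of a] 2 L_nonneg by simp
  next
    case 3
    have pa: "0 \<le> ph a" "ph a \<le> L" using 3 ph_mono ph_lo ph_hi by (metis atLeastAtMost_iff)+
    have "{x\<in>{p..p+L}. G x \<le> a} = {p..p + ph a}"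
      using G ps_le_iff[OF _ 3] pa by force
    then show ?thesis using pa by simp
  qed
qed

lemma leg_meas_down:
  assumes G: "\<And>x. x \<in> {p..p+L} \<Longrightarrow> G x = ps (p + L - x)"
  shows "measure lebesgue {x\<in>{p..p+L}. G x \<le> a} = ph a"
proof -
  have rg: "lo \<le> G x \<and> G x \<le> hi" if "x \<in> {p..p+L}" for x
    using G[OF that] ps_range that by auto
  consider "a < lo" | "hi < a" | "a \<in> {lo..hi}" by force
  then show ?thesis
  proof cases
    case 1
    have e: "{x\<in>{p..p+L}. G x \<le> a} = {}" using rg 1 by force
    show ?thesis unfolding e using ph_low[of a] 1 by simp
  next
    case 2
    have e: "{x\<in>{p..p+L}. G x \<le> a} = {p..p+L}" using rg 2 by force
    show ?thesis unfolding e using ph_high[of a] 2 L_nonneg by simp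
  next
    case 3
    have pa: "0 \<le> ph a" "ph a \<le> L" using 3 ph_mono ph_lo ph_hi by (metis atLeastAtMost_iff)+
    have "{x\<in>{p..p+L}. G x \<le> a} = {p + L - ph a..p + L}"
      using G ps_le_iff[OF _ 3] pa by force
    then show ?thesis using pa by simp
  qed
qed

end

lemma lp_from_cdf:
  fixes g :: "real \<Rightarrow> real"
  assumes cont: "continuous_on {0..1} g" and maps: "\<And>x. x \<in> {0..1} \<Longrightarrow> g x \<in> {0..1}"
    and cdfg: "\<And>a. a \<in> {0..1} \<Longrightarrow> measure lebesgue {x\<in>{0..1}. g x \<le> a} = a"
  shows "lambda_preserving g"
proof -
  define g' where "g' x = (if x \<in> {0..1} then g x else 0)" for x :: real
  have g'm[measurable]: "g' \<in> borel_measurable borel"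
    unfolding g'_def by (rule borel_measurable_continuous_on_if) (auto intro: cont continuous_on_const)
  define P2 where "P2 = density lborel (indicator {0..1::real})"
  define P1 where "P1 = distr P2 borel g'"
  have sP2: "sets P2 = sets borel" unfolding P2_def by simp
  have spP2: "space P2 = UNIV" unfolding P2_def by simp
  have eP2: "emeasure P2 X = emeasure lborel ({0..1} \<inter> X)" if "X \<in> sets borel" for X
    unfolding P2_def using that by (subst emeasure_restricted) auto
  have pre: "{0..1} \<inter> g' -` X = {x\<in>{0..1}. g x \<in> X}" for X unfolding g'_def by auto
  have preB: "{x\<in>{0..1}. g x \<in> X} \<in> sets borel" if "X \<in> sets borel" for X
  proof -
    have "g' -` X \<in> sets borel" using measurable_sets[OF g'm that] by simp
    then show ?thesis unfolding pre[symmetric] by auto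
  qed
  have eP1: "emeasure P1 X = emeasure lborel {x\<in>{0..1}. g x \<in> X}" if "X \<in> sets borel" for X
  proof -
    have "emeasure P1 X = emeasure P2 (g' -` X \<inter> space P2)"
      unfolding P1_def using that by (subst emeasure_distr) (auto simp: sP2 cong: measurable_cong_sets)
    also have "\<dots> = emeasure lborel ({0..1} \<inter> g' -` X)" using that measurable_sets[OF g'm that]
      by (subst eP2) (auto simp: spP2)
    finally show ?thesis unfolding pre .
  qed
  have psP2: "prob_space P2"
    by (rule prob_spaceI) (simp add: spP2 eP2)
  have psP1: "prob_space P1"
    unfolding P1_def by (rule prob_space.prob_space_distr[OF psP2]) (simp add: sP2 cong: measurable_cong_sets)
  have rd2: "real_distribution P2" using psP2 sP2 unfolding real_distribution_def real_distribution_axioms_def by auto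
  have rd1: "real_distribution P1" using psP1 unfolding real_distribution_def real_distribution_axioms_def P1_def by auto
  have cdfeq: "cdf P1 = cdf P2"
  proof
    fix a :: real
    have m1: "measure P1 {..a} = measure lborel {x\<in>{0..1}. g x \<le> a}"
      unfolding measure_def using eP1[of "{..a}"] by simp
    have m2: "measure P2 {..a} = measure lborel ({0..1} \<inter> {..a})"
      unfolding measure_def using eP2[of "{..a}"] by simp
    have "measure lborel {x\<in>{0..1}. g x \<le> a} = measure lborel ({0..1} \<inter> {..a})"
    proof (cases "a < 0")
      case True
      have e1: "{x\<in>{0..1}. g x \<le> a} = {}" using maps True by force
      have e2: "{0..1} \<inter> {..a} = {}" using True by auto
      show ?thesis by (simp only: e1 e2)
    next
      case False
      show ?thesis
      proof (cases "a \<le> 1")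
        case a1: True
        have bs: "{x\<in>{0..1}. g x \<le> a} \<in> sets borel" using preB[of "{..a}"] by simp
        have "measure lborel {x\<in>{0..1}. g x \<le> a} = a"
          using cdfg[of a] a1 False bs by (simp add: measure_completion)
        moreover have "{0..1} \<inter> {..a} = {0..a}" using False a1 by auto
        ultimately show ?thesis using False a1 by simp
      next
        case False
        have e1: "{x\<in>{0..1}. g x \<le> a} = {0..1}" using maps False by force
        have e2: "{0..1} \<inter> {..a} = {0..1}" using False by auto
        show ?thesis by (simp only: e1 e2)
      qed
    qed
    then show "cdf P1 a = cdf P2 a" unfolding cdf_def m1 m2 .
  qed
  have P12: "P1 = P2" by (rule cdf_unique[OF rd1 rd2 cdfeq])
  have key: "emeasure lborel {x\<in>{0..1}. g x \<in> X} = emeasure lborel ({0..1} \<inter> X)" if "X \<in> sets borel" for X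
    using eP1[OF that] eP2[OF that] P12 by simp
  show ?thesis
    unfolding lambda_preserving_def
  proof (intro allI impI)
    fix A :: "real set" assume A: "A \<in> sets lebesgue \<and> A \<subseteq> {0..1}"
    then obtain S N0 N' where SN: "A = S \<union> N0" "N0 \<subseteq> N'" "N' \<in> null_sets lborel" "S \<in> sets lborel"
      by (auto elim: sets_completionE)
    have Sb: "S \<in> sets borel" using SN by simp
    have N'b: "N' \<in> sets borel" using SN by (simp add: null_sets_def)
    have "emeasure lborel {x\<in>{0..1}. g x \<in> N'} = emeasure lborel ({0..1} \<inter> N')" using key[OF N'b] .
    also have "\<dots> \<le> emeasure lborel N'" by (rule emeasure_mono) (use N'b in auto)
    also have "\<dots> = 0" using SN by auto
    finally have "{x\<in>{0..1}. g x \<in> N'} \<in> null_sets lborel" using preB[OF N'b] by (auto simp: null_sets_def)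
    then have nullpre: "{x\<in>{0..1}. g x \<in> N0} \<in> null_sets lebesgue"
      using SN by (intro null_sets_completion_subset[OF _ null_sets_completionI]) auto
    have preA: "{x\<in>{0..1}. g x \<in> A} = {x\<in>{0..1}. g x \<in> S} \<union> {x\<in>{0..1}. g x \<in> N0}" using SN by auto
    have preSl: "{x\<in>{0..1}. g x \<in> S} \<in> sets lebesgue" using preB[OF Sb] by (auto intro: sets_completionI_sets)
    have meas: "{x\<in>{0..1}. g x \<in> A} \<in> sets lebesgue" unfolding preA using preSl nullpre by auto
    have "measure lebesgue {x\<in>{0..1}. g x \<in> A} = measure lebesgue {x\<in>{0..1}. g x \<in> S}"
      unfolding preA by (rule measure_Un_null_set[OF preSl nullpre])
    also have "\<dots> = measure lborel {x\<in>{0..1}. g x \<in> S}" using preB[OF Sb] by simp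
    also have "\<dots> = measure lborel ({0..1} \<inter> S)" unfolding measure_def using key[OF Sb] by simp
    also have "\<dots> = measure lborel S" using SN A by (metis Int_absorb1 Un_subset_iff)
    also have "\<dots> = measure lebesgue A"
    proof -
      have n0: "N0 \<in> null_sets lebesgue" using SN by (intro null_sets_completion_subset[OF _ null_sets_completionI]) auto
      have "measure lebesgue A = measure lebesgue S" unfolding SN(1)
        by (rule measure_Un_null_set[OF _ n0]) (use SN in \<open>auto intro: sets_completionI_sets\<close>)
      then show ?thesis using Sb by simp
    qed
    finally show "{x \<in> {0..1}. g x \<in> A} \<in> sets lebesgue \<and>
        measure lebesgue {x \<in> {0..1}. g x \<in> A} = measure lebesgue A" using meas by simp
  qed
qed

definition monoexp :: "(real \<Rightarrow> real) \<Rightarrow> real \<Rightarrow> real \<Rightarrow> bool" where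
  "monoexp G a b \<longleftrightarrow> (\<forall>s t. a \<le> s \<longrightarrow> s \<le> t \<longrightarrow> t \<le> b \<longrightarrow> G s \<le> G t \<and> 2 * (t - s) \<le> G t - G s) \<or>
       (\<forall>s t. a \<le> s \<longrightarrow> s \<le> t \<longrightarrow> t \<le> b \<longrightarrow> G t \<le> G s \<and> 2 * (t - s) \<le> G s - G t)"

lemma set_closed_le:
  fixes G :: "real \<Rightarrow> real"
  assumes "continuous_on {p..q} G" shows "compact {x\<in>{p..q}. G x \<le> (a::real)}"
proof -
  have "closed ({p..q} \<inter> G -` {..a})" using assms by (intro continuous_closed_preimage) (auto simp: closed_atLeastAtMost)
  then have "compact ({p..q} \<inter> ({p..q} \<inter> G -` {..a}))" by (intro compact_Int_closed) (auto simp: compact_Icc)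
  moreover have "{p..q} \<inter> ({p..q} \<inter> G -` {..a}) = {x\<in>{p..q}. G x \<le> a}" by auto
  ultimately show ?thesis by simp
qed

lemma split_meas:
  fixes G :: "real \<Rightarrow> real"
  assumes pq: "p \<le> q" "q \<le> r" and cont: "continuous_on {p..r} G"
  shows "measure lebesgue {x\<in>{p..r}. G x \<le> a} =
         measure lebesgue {x\<in>{p..q}. G x \<le> a} + measure lebesgue {x\<in>{q..r}. G x \<le> a}"
proof -
  have c1: "continuous_on {p..q} G" "continuous_on {q..r} G" using cont pq by (auto intro: continuous_on_subset)
  have m1: "{x\<in>{p..q}. G x \<le> a} \<in> lmeasurable" "{x\<in>{q..r}. G x \<le> a} \<in> lmeasurable"
    using set_closed_le[OF c1(1)] set_closed_le[OF c1(2)] by (auto intro: lmeasurable_compact)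
  have un: "{x\<in>{p..r}. G x \<le> a} = {x\<in>{p..q}. G x \<le> a} \<union> {x\<in>{q..r}. G x \<le> a}" using pq by auto
  have int: "{x\<in>{p..q}. G x \<le> a} \<inter> {x\<in>{q..r}. G x \<le> a} \<subseteq> {q}" by auto
  have "measure lebesgue ({x\<in>{p..q}. G x \<le> a} \<inter> {x\<in>{q..r}. G x \<le> a}) \<le> measure lebesgue {q}"
    by (rule measure_mono_fmeasurable[OF int]) (use m1 lmeasurable_compact[OF compact_sing[of q]] in auto)
  then have z: "measure lebesgue ({x\<in>{p..q}. G x \<le> a} \<inter> {x\<in>{q..r}. G x \<le> a}) = 0"
    by (simp add: measure_nonneg antisym)
  show ?thesis unfolding un using measure_Un3[OF m1] z by simp
qed

lemma (in leg) leg_x_up: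
  assumes G: "\<And>x. x \<in> {p..p+L} \<Longrightarrow> G x = ps (x - p)"
  shows "continuous_on {p..p+L} G" "monoexp G p (p+L)" "G p = lo" "G (p+L) = hi"
proof -
  have "continuous_on {p..p+L} (\<lambda>x. ps (x - p))"
    by (intro continuous_on_compose2[OF ps_cont]) (auto intro!: continuous_intros)
  then show "continuous_on {p..p+L} G" by (rule continuous_on_eq) (use G in auto)
  have "\<forall>s t. p \<le> s \<longrightarrow> s \<le> t \<longrightarrow> t \<le> p+L \<longrightarrow> G s \<le> G t \<and> 2 * (t - s) \<le> G t - G s"
  proof (intro allI impI)
    fix s t assume st: "p \<le> s" "s \<le> t" "t \<le> p+L"
    have "ps (s - p) \<le> ps (t - p)" "2 * ((t - p) - (s - p)) \<le> ps (t - p) - ps (s - p)"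
      using ps_exp[of "s - p" "t - p"] st by auto
    then show "G s \<le> G t \<and> 2 * (t - s) \<le> G t - G s" using G[of s] G[of t] st by auto
  qed
  then show "monoexp G p (p+L)" unfolding monoexp_def by blast
  show "G p = lo" using G[of p] L_nonneg ps0 by simp
  show "G (p+L) = hi" using G[of "p+L"] L_nonneg psL by simp
qed

lemma (in leg) leg_x_down:
  assumes G: "\<And>x. x \<in> {p..p+L} \<Longrightarrow> G x = ps (p + L - x)"
  shows "continuous_on {p..p+L} G" "monoexp G p (p+L)" "G p = hi" "G (p+L) = lo"
proof -
  have "continuous_on {p..p+L} (\<lambda>x. ps (p + L - x))"
    by (intro continuous_on_compose2[OF ps_cont]) (auto intro!: continuous_intros)
  then show "continuous_on {p..p+L} G" by (rule continuous_on_eq) (use G in auto)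
  have "\<forall>s t. p \<le> s \<longrightarrow> s \<le> t \<longrightarrow> t \<le> p+L \<longrightarrow> G t \<le> G s \<and> 2 * (t - s) \<le> G s - G t"
  proof (intro allI impI)
    fix s t assume st: "p \<le> s" "s \<le> t" "t \<le> p+L"
    have "ps (p + L - t) \<le> ps (p + L - s)" "2 * ((p + L - s) - (p + L - t)) \<le> ps (p + L - s) - ps (p + L - t)"
      using ps_exp[of "p + L - t" "p + L - s"] st by auto
    then show "G t \<le> G s \<and> 2 * (t - s) \<le> G s - G t" using G[of s] G[of t] st by auto
  qed
  then show "monoexp G p (p+L)" unfolding monoexp_def by blast
  show "G p = hi" using G[of p] L_nonneg psL by simp
  show "G (p+L) = lo" using G[of "p+L"] L_nonneg ps0 by simp
qed


definition c1 :: "(nat \<Rightarrow> real) \<Rightarrow> nat \<Rightarrow> real" where "c1 m k = m k / 4"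
definition c2 :: "(nat \<Rightarrow> real) \<Rightarrow> nat \<Rightarrow> nat \<Rightarrow> real" where "c2 m u k = (if k < u then m k / 4 else m k / 2)"
definition c3 :: "(nat \<Rightarrow> real) \<Rightarrow> nat \<Rightarrow> real" where "c3 m k = m k / 2"
definition L1 :: "(nat \<Rightarrow> real) \<Rightarrow> nat \<Rightarrow> nat \<Rightarrow> real" where "L1 m lo u = (\<Sum>k\<in>{lo..<u}. c1 m k)"
definition L2 :: "(nat \<Rightarrow> real) \<Rightarrow> nat \<Rightarrow> nat \<Rightarrow> nat \<Rightarrow> real" where "L2 m lo hi u = (\<Sum>k\<in>{lo..<Suc hi}. c2 m u k)"
definition L3 :: "(nat \<Rightarrow> real) \<Rightarrow> nat \<Rightarrow> nat \<Rightarrow> real" where "L3 m lo hi = (\<Sum>k\<in>{lo..<Suc hi}. c3 m k)"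

definition H :: "nat \<Rightarrow> (nat \<Rightarrow> real) \<Rightarrow> nat \<Rightarrow> nat \<Rightarrow> nat \<Rightarrow> real \<Rightarrow> real" where
  "H N m lo hi u t = (if t \<le> L1 m lo u then psi N (c1 m) lo u (L1 m lo u - t)
     else if t \<le> L1 m lo u + L2 m lo hi u then psi N (c2 m u) lo (Suc hi) (t - L1 m lo u)
     else psi N (c3 m) lo (Suc hi) (L1 m lo u + L2 m lo hi u + L3 m lo hi - t))"

locale walk =
  fixes N :: nat and m :: "nat \<Rightarrow> real" and lo hi u :: nat
  assumes N: "N > 0" and lohi: "lo \<le> hi" and lou: "lo \<le> u" and uhi: "u \<le> Suc hi" and hiN: "Suc hi \<le> N"
    and mpos: "\<And>k. lo \<le> k \<Longrightarrow> k \<le> hi \<Longrightarrow> 0 < m k"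
    and mle: "\<And>k. lo \<le> k \<Longrightarrow> k \<le> hi \<Longrightarrow> m k \<le> 1 / (2 * real N)"
begin

lemma mk: "lo \<le> k \<Longrightarrow> k \<le> hi \<Longrightarrow> 0 < m k \<and> m k \<le> 1 / (2 * real N)"
  using mpos mle by auto

lemma leg1: "leg N (c1 m) lo u"
proof
  fix k assume k: "lo \<le> k" "k < u"
  then have "k \<le> hi" using uhi by auto
  then show "0 < c1 m k" "c1 m k \<le> 1 / (2 * real N)" using mk[of k] k unfolding c1_def by auto
qed (use N lou in auto)
lemma leg2: "leg N (c2 m u) lo (Suc hi)"
proof
  fix k assume k: "lo \<le> k" "k < Suc hi"
  then have "k \<le> hi" by auto
  then show "0 < c2 m u k" "c2 m u k \<le> 1 / (2 * real N)" using mk[of k] k unfolding c2_def by auto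
qed (use N lou uhi lohi in auto)
lemma leg3: "leg N (c3 m) lo (Suc hi)"
proof
  fix k assume k: "lo \<le> k" "k < Suc hi"
  then have "k \<le> hi" by auto
  then show "0 < c3 m k" "c3 m k \<le> 1 / (2 * real N)" using mk[of k] k unfolding c3_def by auto
qed (use N lou uhi lohi in auto)

lemma L1eq: "leg.L (c1 m) lo u = L1 m lo u" by (simp add: leg.L_def[OF leg1] L1_def)
lemma L2eq: "leg.L (c2 m u) lo (Suc hi) = L2 m lo hi u" by (simp add: leg.L_def[OF leg2] L2_def)
lemma L3eq: "leg.L (c3 m) lo (Suc hi) = L3 m lo hi" by (simp add: leg.L_def[OF leg3] L3_def)

abbreviation "l1 \<equiv> L1 m lo u"
abbreviation "l2 \<equiv> L2 m lo hi u"
abbreviation "l3 \<equiv> L3 m lo hi"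
abbreviation "hh \<equiv> l1 + l2 + l3"
abbreviation "p1 \<equiv> psi N (c1 m) lo u"
abbreviation "p2 \<equiv> psi N (c2 m u) lo (Suc hi)"
abbreviation "p3 \<equiv> psi N (c3 m) lo (Suc hi)"

lemma l1_nonneg: "0 \<le> l1" using leg.L_nonneg[OF leg1] L1eq by simp

lemma sum_pos_range: fixes f :: "nat \<Rightarrow> real" assumes "\<And>k. lo \<le> k \<Longrightarrow> k \<le> hi \<Longrightarrow> 0 < f k" shows "0 < (\<Sum>k\<in>{lo..<Suc hi}. f k)"
proof -
  have "0 < f lo" using assms lohi by auto
  moreover have "(\<Sum>k\<in>{lo..<Suc hi}. f k) = f lo + (\<Sum>k\<in>{Suc lo..<Suc hi}. f k)"
    using lohi by (subst sum.atLeast_Suc_lessThan) auto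
  moreover have "0 \<le> (\<Sum>k\<in>{Suc lo..<Suc hi}. f k)" using assms by (intro sum_nonneg) (auto intro: less_imp_le)
  ultimately show ?thesis by linarith
qed

lemma l2_pos: "0 < l2" unfolding L2_def c2_def by (rule sum_pos_range) (use mpos in auto)
lemma l3_pos: "0 < l3" unfolding L3_def c3_def by (rule sum_pos_range) (use mpos in auto)

lemma combine:
  "(\<Sum>k\<in>{lo..<u}. c1 m k * f k) + (\<Sum>k\<in>{lo..<Suc hi}. c2 m u k * f k) + (\<Sum>k\<in>{lo..<Suc hi}. c3 m k * f k)
   = (\<Sum>k\<in>{lo..<Suc hi}. m k * f k)"
proof -
  have fil: "{k\<in>{lo..<Suc hi}. k < u} = {lo..<u}" using uhi by auto
  have "(\<Sum>k\<in>{lo..<u}. c1 m k * f k) = (\<Sum>k\<in>{lo..<Suc hi}. if k < u then c1 m k * f k else 0)"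
    unfolding fil[symmetric] by (rule sum.inter_filter) simp
  then have "(\<Sum>k\<in>{lo..<u}. c1 m k * f k) + (\<Sum>k\<in>{lo..<Suc hi}. c2 m u k * f k) + (\<Sum>k\<in>{lo..<Suc hi}. c3 m k * f k)
     = (\<Sum>k\<in>{lo..<Suc hi}. (if k < u then c1 m k * f k else 0) + c2 m u k * f k + c3 m k * f k)"
    by (simp add: sum.distrib)
  also have "\<dots> = (\<Sum>k\<in>{lo..<Suc hi}. m k * f k)"
    by (rule sum.cong) (auto simp: c1_def c2_def c3_def field_simps)
  finally show ?thesis .
qed

lemma total: "hh = (\<Sum>k\<in>{lo..<Suc hi}. m k)"
  using combine[of "\<lambda>_. 1"] unfolding L1_def L2_def L3_def by simp

lemma phisum: "phi N (c1 m) lo u a + phi N (c2 m u) lo (Suc hi) a + phi N (c3 m) lo (Suc hi) a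
   = (\<Sum>k\<in>{lo..<Suc hi}. m k * cl (real N * a - real k))"
  using combine[of "\<lambda>k. cl (real N * a - real k)"] unfolding phi_def by simp

lemma H1: "t \<in> {0..l1} \<Longrightarrow> H N m lo hi u t = p1 (l1 - t)"
  unfolding H_def by simp

lemma H2: assumes "t \<in> {l1..l1+l2}" shows "H N m lo hi u t = p2 (t - l1)"
proof (cases "t \<le> l1")
  case True
  then have "t = l1" using assms by auto
  then show ?thesis unfolding H_def using leg.ps0[OF leg1] leg.ps0[OF leg2] by simp
next
  case False then show ?thesis using assms unfolding H_def by simp
qed

lemma H3: assumes "t \<in> {l1+l2..hh}" shows "H N m lo hi u t = p3 (hh - t)"
proof (cases "t \<le> l1 + l2")
  case True
  then have t: "t = l1 + l2" using assms by auto
  then have "\<not> t \<le> l1" using l2_pos by auto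
  then show ?thesis unfolding H_def using t leg.psL[OF leg2] leg.psL[OF leg3] L2eq L3eq by simp
next
  case False then show ?thesis using assms l2_pos unfolding H_def by auto
qed

lemma H0: "H N m lo hi u 0 = real u / real N"
  using H1[of 0] l1_nonneg leg.psL[OF leg1] L1eq by simp

lemma Hh: "H N m lo hi u hh = real lo / real N"
  using H3[of hh] l1_nonneg l2_pos l3_pos leg.ps0[OF leg3] by simp

lemma gp_u: "gridpt N (real u / real N)" using uhi hiN unfolding gridpt_def by auto
lemma gp_lo: "gridpt N (real lo / real N)" using lohi hiN unfolding gridpt_def by auto
lemma gp_hi: "gridpt N (real (Suc hi) / real N)" using hiN unfolding gridpt_def by blast

end

definition unit_legs :: "(real \<Rightarrow> real) \<Rightarrow> nat \<Rightarrow> real \<Rightarrow> real \<Rightarrow> real \<Rightarrow> bool" where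
  "unit_legs G N a0 b0 \<gamma> \<longleftrightarrow> (\<forall>y\<in>{a0..b0}. \<exists>a b. a0 \<le> a \<and> a \<le> y \<and> y \<le> b \<and> b \<le> b0 \<and> \<gamma> \<le> b - a \<and>
     gridpt N (G a) \<and> gridpt N (G b) \<and> continuous_on {a..b} G \<and> monoexp G a b)"

lemma three_legs:
  fixes G :: "real \<Rightarrow> real"
  assumes q: "q0 \<le> q1" "q1 \<le> q2" "q2 \<le> q3"
    and c: "continuous_on {q0..q1} G" "continuous_on {q1..q2} G" "continuous_on {q2..q3} G"
    and me: "monoexp G q0 q1" "monoexp G q1 q2" "monoexp G q2 q3"
    and gp: "gridpt N (G q0)" "gridpt N (G q1)" "gridpt N (G q2)" "gridpt N (G q3)"
    and len: "q0 = q1 \<or> \<gamma> \<le> q1 - q0" "\<gamma> \<le> q2 - q1" "q2 = q3 \<or> \<gamma> \<le> q3 - q2"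
  shows "unit_legs G N q0 q3 \<gamma>" "continuous_on {q0..q3} G"
proof -
  show "unit_legs G N q0 q3 \<gamma>" unfolding unit_legs_def
  proof
    fix y assume y: "y \<in> {q0..q3}"
    consider "y \<le> q1 \<and> q0 \<noteq> q1" | "q1 \<le> y \<and> y \<le> q2" | "y \<le> q1 \<and> q0 = q1" | "q2 \<le> y \<and> q2 \<noteq> q3" | "q2 \<le> y \<and> q2 = q3"
      by linarith
    then show "\<exists>a b. q0 \<le> a \<and> a \<le> y \<and> y \<le> b \<and> b \<le> q3 \<and> \<gamma> \<le> b - a \<and>
     gridpt N (G a) \<and> gridpt N (G b) \<and> continuous_on {a..b} G \<and> monoexp G a b"
    proof cases
      case 1 then show ?thesis using y q c me gp len by (intro exI[of _ q0] exI[of _ q1]) auto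
    next
      case 2 then show ?thesis using y q c me gp len by (intro exI[of _ q1] exI[of _ q2]) auto
    next
      case 3 then have "y = q1" using y by auto
      then show ?thesis using y q c me gp len by (intro exI[of _ q1] exI[of _ q2]) auto
    next
      case 4 then show ?thesis using y q c me gp len by (intro exI[of _ q2] exI[of _ q3]) auto
    next
      case 5 then have "y = q2" using y by auto
      then show ?thesis using y q c me gp len by (intro exI[of _ q1] exI[of _ q2]) auto
    qed
  qed
  have "continuous_on ({q0..q1} \<union> {q1..q2} \<union> {q2..q3}) G"
    by (intro continuous_on_closed_Un c) auto
  moreover have "{q0..q1} \<union> {q1..q2} \<union> {q2..q3} = {q0..q3}" using q by auto
  ultimately show "continuous_on {q0..q3} G" by simp
qed

context walk begin

lemma unit_left:
  fixes G :: "real \<Rightarrow> real"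
  assumes G: "\<And>x. x \<in> {x0..x0+hh} \<Longrightarrow> G x = H N m lo hi u (x - x0)"
  defines "\<gamma> \<equiv> (if 0 < l1 then min l1 (min l2 l3) else min l2 l3)"
  shows "continuous_on {x0..x0+hh} G"
    and "\<And>x. x \<in> {x0..x0+hh} \<Longrightarrow> real lo / real N \<le> G x \<and> G x \<le> real (Suc hi) / real N"
    and "measure lebesgue {x\<in>{x0..x0+hh}. G x \<le> a} = (\<Sum>k\<in>{lo..<Suc hi}. m k * cl (real N * a - real k))"
    and "G x0 = real u / real N" "G (x0+hh) = real lo / real N"
    and "unit_legs G N x0 (x0+hh) \<gamma>"
    and "\<And>s. s \<in> {0..l3} \<Longrightarrow> G (x0 + hh - s) = p3 s"
proof -
  interpret A1: leg N "c1 m" lo u by (rule leg1)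
  interpret A2: leg N "c2 m u" lo "Suc hi" by (rule leg2)
  interpret A3: leg N "c3 m" lo "Suc hi" by (rule leg3)
  have l1p: "0 \<le> l1" by (rule l1_nonneg)
  have g1: "G x = p1 (x0 + A1.L - x)" if "x \<in> {x0..x0+A1.L}" for x
    using G[of x] H1[of "x - x0"] that l2_pos l3_pos by (auto simp: L1eq algebra_simps)
  have g2: "G x = p2 (x - (x0 + l1))" if "x \<in> {x0+l1..x0+l1+A2.L}" for x
    using G[of x] H2[of "x - x0"] that l1p l2_pos l3_pos by (auto simp: L2eq algebra_simps)
  have g3: "G x = p3 ((x0 + l1 + l2) + A3.L - x)" if "x \<in> {x0+l1+l2..x0+l1+l2+A3.L}" for x
    using G[of x] H3[of "x - x0"] that l1p l2_pos l3_pos by (auto simp: L3eq algebra_simps)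
  note e1 = A1.leg_x_down[of x0 G, OF g1, unfolded L1eq]
  note e2 = A2.leg_x_up[of "x0 + l1" G, OF g2, unfolded L2eq]
  note e3 = A3.leg_x_down[of "x0 + l1 + l2" G, OF g3, unfolded L3eq]
  have hhe: "x0 + l1 + l2 + l3 = x0 + hh" by simp
  have gl: "\<gamma> \<le> l2" "\<gamma> \<le> l3" "l1 = 0 \<or> \<gamma> \<le> l1" unfolding \<gamma>_def using l1p by auto
  have len: "x0 = x0 + l1 \<or> \<gamma> \<le> x0 + l1 - x0" "\<gamma> \<le> x0 + l1 + l2 - (x0 + l1)"
     "x0 + l1 + l2 = x0 + l1 + l2 + l3 \<or> \<gamma> \<le> x0 + l1 + l2 + l3 - (x0 + l1 + l2)"
    using gl by auto
  have tl: "unit_legs G N x0 (x0 + l1 + l2 + l3) \<gamma>" "continuous_on {x0..x0 + l1 + l2 + l3} G"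
    by (rule three_legs[OF _ _ _ e1(1) e2(1) e3(1) e1(2) e2(2) e3(2) _ _ _ _ len],
        use l1p l2_pos l3_pos e1 e2 e3 gp_u gp_lo gp_hi in \<open>auto\<close>)+
  then show "continuous_on {x0..x0+hh} G" "unit_legs G N x0 (x0+hh) \<gamma>" by (simp_all add: add.assoc)
  show "\<And>x. x \<in> {x0..x0+hh} \<Longrightarrow> real lo / real N \<le> G x \<and> G x \<le> real (Suc hi) / real N"
  proof -
    fix x assume x: "x \<in> {x0..x0+hh}"
    consider "x \<in> {x0..x0+l1}" | "x \<in> {x0+l1..x0+l1+l2}" | "x \<in> {x0+l1+l2..x0+l1+l2+l3}" using x by force
    then show "real lo / real N \<le> G x \<and> G x \<le> real (Suc hi) / real N"
    proof cases
      case 1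
      have "x0 + l1 - x \<in> {0..A1.L}" using 1 L1eq by auto
      then have "lo / N \<le> G x \<and> G x \<le> u / N" using A1.ps_range g1[of x] 1 L1eq by auto
      moreover have "real u / real N \<le> real (Suc hi) / real N" using uhi by (simp add: divide_right_mono)
      ultimately show ?thesis by auto
    next
      case 2
      have "x - (x0 + l1) \<in> {0..A2.L}" using 2 L2eq by auto
      then show ?thesis using A2.ps_range g2[of x] 2 L2eq by auto
    next
      case 3
      have "(x0 + l1 + l2) + A3.L - x \<in> {0..A3.L}" using 3 L3eq by auto
      then show ?thesis using A3.ps_range g3[of x] 3 L3eq by auto
    qed
  qed
  show "G x0 = real u / real N" using e1(3) .
  show "G (x0+hh) = real lo / real N" using e3(4) by (simp add: add.assoc)
  have c12: "continuous_on {x0..x0+l1+l2} G"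
    by (intro continuous_on_subset[OF tl(2)]) (use l3_pos in auto)
  have s1: "measure lebesgue {x\<in>{x0..x0+l1+l2+l3}. G x \<le> a} = measure lebesgue {x\<in>{x0..x0+l1+l2}. G x \<le> a} + measure lebesgue {x\<in>{x0+l1+l2..x0+l1+l2+l3}. G x \<le> a}"
    by (rule split_meas[OF _ _ tl(2)]) (use l1p l2_pos l3_pos in auto)
  have s2: "measure lebesgue {x\<in>{x0..x0+l1+l2}. G x \<le> a} = measure lebesgue {x\<in>{x0..x0+l1}. G x \<le> a} + measure lebesgue {x\<in>{x0+l1..x0+l1+l2}. G x \<le> a}"
    by (rule split_meas[OF _ _ c12]) (use l1p l2_pos in auto)
  have m1: "measure lebesgue {x\<in>{x0..x0+l1}. G x \<le> a} = phi N (c1 m) lo u a"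
    using A1.leg_meas_down[of x0 G, OF g1] unfolding L1eq .
  have m2: "measure lebesgue {x\<in>{x0+l1..x0+l1+l2}. G x \<le> a} = phi N (c2 m u) lo (Suc hi) a"
    using A2.leg_meas_up[of "x0+l1" G, OF g2] unfolding L2eq .
  have m3: "measure lebesgue {x\<in>{x0+l1+l2..x0+l1+l2+l3}. G x \<le> a} = phi N (c3 m) lo (Suc hi) a"
    using A3.leg_meas_down[of "x0+l1+l2" G, OF g3] unfolding L3eq .
  have "measure lebesgue {x\<in>{x0..x0+l1+l2+l3}. G x \<le> a} = (\<Sum>k\<in>{lo..<Suc hi}. m k * cl (real N * a - real k))"
    unfolding s1 s2 m1 m2 m3 phisum[symmetric] by simp
  then show "measure lebesgue {x\<in>{x0..x0+hh}. G x \<le> a} = (\<Sum>k\<in>{lo..<Suc hi}. m k * cl (real N * a - real k))"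
    by (simp add: add.assoc)
  show "\<And>s. s \<in> {0..l3} \<Longrightarrow> G (x0 + hh - s) = p3 s"
  proof -
    fix s assume s: "s \<in> {0..l3}"
    then have "x0 + hh - s \<in> {x0+l1+l2..x0+l1+l2+A3.L}" using L3eq by auto
    then show "G (x0 + hh - s) = p3 s" using g3 L3eq by auto
  qed
qed

lemma unit_right:
  fixes G :: "real \<Rightarrow> real"
  assumes G: "\<And>x. x \<in> {x0..x0+hh} \<Longrightarrow> G x = H N m lo hi u (x0 + hh - x)"
  defines "\<gamma> \<equiv> (if 0 < l1 then min l1 (min l2 l3) else min l2 l3)"
  shows "continuous_on {x0..x0+hh} G"
    and "\<And>x. x \<in> {x0..x0+hh} \<Longrightarrow> real lo / real N \<le> G x \<and> G x \<le> real (Suc hi) / real N"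
    and "measure lebesgue {x\<in>{x0..x0+hh}. G x \<le> a} = (\<Sum>k\<in>{lo..<Suc hi}. m k * cl (real N * a - real k))"
    and "G x0 = real lo / real N" "G (x0+hh) = real u / real N"
    and "unit_legs G N x0 (x0+hh) \<gamma>"
    and "\<And>s. s \<in> {0..l3} \<Longrightarrow> G (x0 + s) = p3 s"
proof -
  interpret A1: leg N "c1 m" lo u by (rule leg1)
  interpret A2: leg N "c2 m u" lo "Suc hi" by (rule leg2)
  interpret A3: leg N "c3 m" lo "Suc hi" by (rule leg3)
  have l1p: "0 \<le> l1" by (rule l1_nonneg)
  have g3: "G x = p3 (x - x0)" if "x \<in> {x0..x0+A3.L}" for x
    using G[of x] H3[of "x0 + hh - x"] that l1p l2_pos l3_pos by (auto simp: L3eq algebra_simps)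
  have g2: "G x = p2 ((x0 + l3) + A2.L - x)" if "x \<in> {x0+l3..x0+l3+A2.L}" for x
    using G[of x] H2[of "x0 + hh - x"] that l1p l2_pos l3_pos by (auto simp: L2eq algebra_simps)
  have g1: "G x = p1 (x - (x0 + l3 + l2))" if "x \<in> {x0+l3+l2..x0+l3+l2+A1.L}" for x
    using G[of x] H1[of "x0 + hh - x"] that l1p l2_pos l3_pos by (auto simp: L1eq algebra_simps)
  note e3 = A3.leg_x_up[of x0 G, OF g3, unfolded L3eq]
  note e2 = A2.leg_x_down[of "x0 + l3" G, OF g2, unfolded L2eq]
  note e1 = A1.leg_x_up[of "x0 + l3 + l2" G, OF g1, unfolded L1eq]
  have gl: "\<gamma> \<le> l2" "\<gamma> \<le> l3" "l1 = 0 \<or> \<gamma> \<le> l1" unfolding \<gamma>_def using l1p by auto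
  have len: "x0 = x0 + l3 \<or> \<gamma> \<le> x0 + l3 - x0" "\<gamma> \<le> x0 + l3 + l2 - (x0 + l3)"
     "x0 + l3 + l2 = x0 + l3 + l2 + l1 \<or> \<gamma> \<le> x0 + l3 + l2 + l1 - (x0 + l3 + l2)"
    using gl by auto
  have tl: "unit_legs G N x0 (x0 + l3 + l2 + l1) \<gamma>" "continuous_on {x0..x0 + l3 + l2 + l1} G"
    by (rule three_legs[OF _ _ _ e3(1) e2(1) e1(1) e3(2) e2(2) e1(2) _ _ _ _ len],
        use l1p l2_pos l3_pos e1 e2 e3 gp_u gp_lo gp_hi in \<open>auto\<close>)+
  have hhe: "x0 + l3 + l2 + l1 = x0 + hh" by simp
  show "continuous_on {x0..x0+hh} G" "unit_legs G N x0 (x0+hh) \<gamma>" using tl unfolding hhe by simp_all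
  show "\<And>x. x \<in> {x0..x0+hh} \<Longrightarrow> real lo / real N \<le> G x \<and> G x \<le> real (Suc hi) / real N"
  proof -
    fix x assume x: "x \<in> {x0..x0+hh}"
    consider "x \<in> {x0..x0+l3}" | "x \<in> {x0+l3..x0+l3+l2}" | "x \<in> {x0+l3+l2..x0+l3+l2+l1}"
      using x by (auto, linarith)
    then show "real lo / real N \<le> G x \<and> G x \<le> real (Suc hi) / real N"
    proof cases
      case 1
      have "x - x0 \<in> {0..A3.L}" using 1 L3eq by auto
      then show ?thesis using A3.ps_range g3[of x] 1 L3eq by auto
    next
      case 2
      have "(x0 + l3) + A2.L - x \<in> {0..A2.L}" using 2 L2eq by auto
      then show ?thesis using A2.ps_range g2[of x] 2 L2eq by auto
    next
      case 3
      have "x - (x0 + l3 + l2) \<in> {0..A1.L}" using 3 L1eq by auto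
      then have "lo / N \<le> G x \<and> G x \<le> u / N" using A1.ps_range g1[of x] 3 L1eq by auto
      moreover have "real u / real N \<le> real (Suc hi) / real N" using uhi by (simp add: divide_right_mono)
      ultimately show ?thesis by auto
    qed
  qed
  show "G x0 = real lo / real N" using e3(3) .
  show "G (x0+hh) = real u / real N" using e1(4) unfolding hhe .
  have c12: "continuous_on {x0..x0+l3+l2} G"
    by (intro continuous_on_subset[OF tl(2)]) (use l1p in auto)
  have s1: "measure lebesgue {x\<in>{x0..x0+l3+l2+l1}. G x \<le> a} = measure lebesgue {x\<in>{x0..x0+l3+l2}. G x \<le> a} + measure lebesgue {x\<in>{x0+l3+l2..x0+l3+l2+l1}. G x \<le> a}"
    by (rule split_meas[OF _ _ tl(2)]) (use l1p l2_pos l3_pos in auto)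
  have s2: "measure lebesgue {x\<in>{x0..x0+l3+l2}. G x \<le> a} = measure lebesgue {x\<in>{x0..x0+l3}. G x \<le> a} + measure lebesgue {x\<in>{x0+l3..x0+l3+l2}. G x \<le> a}"
    by (rule split_meas[OF _ _ c12]) (use l3_pos l2_pos in auto)
  have m3: "measure lebesgue {x\<in>{x0..x0+l3}. G x \<le> a} = phi N (c3 m) lo (Suc hi) a"
    using A3.leg_meas_up[of x0 G, OF g3] unfolding L3eq .
  have m2: "measure lebesgue {x\<in>{x0+l3..x0+l3+l2}. G x \<le> a} = phi N (c2 m u) lo (Suc hi) a"
    using A2.leg_meas_down[of "x0+l3" G, OF g2] unfolding L2eq .
  have m1: "measure lebesgue {x\<in>{x0+l3+l2..x0+l3+l2+l1}. G x \<le> a} = phi N (c1 m) lo u a"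
    using A1.leg_meas_up[of "x0+l3+l2" G, OF g1] unfolding L1eq .
  have "measure lebesgue {x\<in>{x0..x0+l3+l2+l1}. G x \<le> a} = (\<Sum>k\<in>{lo..<Suc hi}. m k * cl (real N * a - real k))"
    unfolding s1 s2 m1 m2 m3 phisum[symmetric] by simp
  then show "measure lebesgue {x\<in>{x0..x0+hh}. G x \<le> a} = (\<Sum>k\<in>{lo..<Suc hi}. m k * cl (real N * a - real k))"
    unfolding hhe .
  show "\<And>s. s \<in> {0..l3} \<Longrightarrow> G (x0 + s) = p3 s"
  proof -
    fix s assume s: "s \<in> {0..l3}"
    then have "x0 + s \<in> {x0..x0+A3.L}" using L3eq by auto
    then show "G (x0 + s) = p3 s" using g3 by auto
  qed
qed

end

lemma chain_meas:
  fixes G :: "real \<Rightarrow> real" and t :: "nat \<Rightarrow> real"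
  assumes mono: "\<And>i. i < n \<Longrightarrow> t i \<le> t (Suc i)" and cont: "continuous_on {t 0..t n} G"
  shows "measure lebesgue {x\<in>{t 0..t n}. G x \<le> a} = (\<Sum>i<n. measure lebesgue {x\<in>{t i..t (Suc i)}. G x \<le> a})"
  using mono cont
proof (induction n)
  case 0
  have S: "{x\<in>{t 0..t 0}. G x \<le> a} \<in> lmeasurable"
    using set_closed_le[OF "0.prems"(2)] by (rule lmeasurable_compact)
  have sub: "{x\<in>{t 0..t 0}. G x \<le> a} \<subseteq> {t 0}" by auto
  have "measure lebesgue {x\<in>{t 0..t 0}. G x \<le> a} \<le> measure lebesgue {t 0}"
    by (rule measure_mono_fmeasurable[OF sub fmeasurableD[OF S] lmeasurable_compact[OF compact_sing]])
  moreover have "0 \<le> measure lebesgue {x\<in>{t 0..t 0}. G x \<le> a}" by (rule measure_nonneg)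
  moreover have "measure lebesgue {t 0} = 0" by simp
  ultimately have "measure lebesgue {x\<in>{t 0..t 0}. G x \<le> a} = 0" by linarith
  then show ?case by simp
next
  case (Suc n)
  note mm = Suc.prems(1)
  have tj: "t 0 \<le> t j" if "j \<le> n" for j using that
  proof (induction j)
    case 0 then show ?case by simp
  next
    case (Suc j)
    have "t j \<le> t (Suc j)" using mm[of j] Suc.prems by simp
    moreover have "t 0 \<le> t j" using Suc.IH Suc.prems by simp
    ultimately show ?case by simp
  qed
  have tm: "t 0 \<le> t n" using tj by simp
  have tn: "t n \<le> t (Suc n)" using Suc.prems(1) by simp
  have c: "continuous_on {t 0..t n} G" using Suc.prems(2) by (rule continuous_on_subset) (use tn in auto)
  have mn: "\<And>i. i < n \<Longrightarrow> t i \<le> t (Suc i)" using Suc.prems(1) by simp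
  have "measure lebesgue {x\<in>{t 0..t (Suc n)}. G x \<le> a} = measure lebesgue {x\<in>{t 0..t n}. G x \<le> a} + measure lebesgue {x\<in>{t n..t (Suc n)}. G x \<le> a}"
    by (rule split_meas[OF tm tn Suc.prems(2)])
  moreover have "measure lebesgue {x\<in>{t 0..t n}. G x \<le> a} = (\<Sum>i<n. measure lebesgue {x\<in>{t i..t (Suc i)}. G x \<le> a})"
    by (rule Suc.IH[OF mn c])
  ultimately show ?case by simp
qed

definition tpt :: "nat \<Rightarrow> nat \<Rightarrow> real" where
  "tpt N i = min 1 (max 0 ((2 * real i - 1) / (2 * real N)))"
definition Dc :: "nat \<Rightarrow> nat \<Rightarrow> real set" where "Dc N i = {tpt N i .. tpt N (Suc i)}"
definition Phi :: "(real \<Rightarrow> real) \<Rightarrow> nat \<Rightarrow> nat \<Rightarrow> real \<Rightarrow> real" where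
  "Phi f N i v = measure lebesgue {x\<in>Dc N i. f x \<le> v}"
definition Mc :: "(real \<Rightarrow> real) \<Rightarrow> nat \<Rightarrow> nat \<Rightarrow> nat \<Rightarrow> real" where
  "Mc f N i k = Phi f N i ((real k + 1) / real N) - Phi f N i (real k / real N)"
definition cmin :: "(real \<Rightarrow> real) \<Rightarrow> nat \<Rightarrow> nat \<Rightarrow> real" where "cmin f N i = Inf (f ` Dc N i)"
definition dmax :: "(real \<Rightarrow> real) \<Rightarrow> nat \<Rightarrow> nat \<Rightarrow> real" where "dmax f N i = Sup (f ` Dc N i)"
definition lof :: "(real \<Rightarrow> real) \<Rightarrow> nat \<Rightarrow> nat \<Rightarrow> nat" where "lof f N i = nat \<lfloor>real N * cmin f N i\<rfloor>"
definition hif :: "(real \<Rightarrow> real) \<Rightarrow> nat \<Rightarrow> nat \<Rightarrow> nat" where "hif f N i = nat \<lceil>real N * dmax f N i\<rceil> - 1"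

locale dat =
  fixes f :: "real \<Rightarrow> real" and N :: nat
  assumes fC: "f \<in> C_lambda" and N: "N > 0"
begin

lemma fcont: "continuous_on {0..1} f" and fmaps: "\<And>x. x \<in> {0..1} \<Longrightarrow> f x \<in> {0..1}"
  and flp: "lambda_preserving f"
  using fC unfolding C_lambda_def by (auto simp: image_subset_iff)

lemma tpt0: "tpt N 0 = 0" unfolding tpt_def using N by (simp add: field_simps)
lemma tptN: "tpt N (Suc N) = 1" unfolding tpt_def using N by (simp add: field_simps)
lemma tpt_mid: "1 \<le> i \<Longrightarrow> i \<le> N \<Longrightarrow> tpt N i = (2 * real i - 1) / (2 * real N)"
  unfolding tpt_def using N by (auto simp: field_simps)
lemma tpt_range: "0 \<le> tpt N i" "tpt N i \<le> 1" unfolding tpt_def by auto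
lemma tpt_mono: "tpt N i \<le> tpt N (Suc i)"
proof -
  have "(2 * real i - 1) / (2 * real N) \<le> (2 * real (Suc i) - 1) / (2 * real N)"
    using N by (intro divide_right_mono) auto
  then show ?thesis unfolding tpt_def by (rule min.mono[OF order_refl max.mono[OF order_refl]])
qed
lemma tpt_len: "i \<le> N \<Longrightarrow> tpt N (Suc i) - tpt N i = (if i = 0 \<or> i = N then 1 / (2 * real N) else 1 / real N)"
proof -
  assume i: "i \<le> N"
  consider "i = 0" | "i = N" | "0 < i" "i < N" using i by linarith
  then show ?thesis
  proof cases
    case 1 then show ?thesis using tpt_mid[of 1] N tpt0 by (simp add: field_simps)
  next
    case 2 then show ?thesis using tpt_mid[of N] N tptN by (auto simp: field_simps)
  next
    case 3 then show ?thesis using tpt_mid[of i] tpt_mid[of "Suc i"] N by (auto simp: field_simps)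
  qed
qed
lemma tpt_lt: assumes "i \<le> N" shows "tpt N i < tpt N (Suc i)"
proof -
  have "0 < tpt N (Suc i) - tpt N i" using tpt_len[OF assms] N by simp
  then show ?thesis by simp
qed

lemma Dc_sub: "Dc N i \<subseteq> {0..1}" unfolding Dc_def using tpt_range by auto
lemma Dc_mem: "x \<in> Dc N i \<Longrightarrow> 0 \<le> x \<and> x \<le> 1" using Dc_sub[of i] by (meson atLeastAtMost_iff subsetD)
lemma Dc_cont: "continuous_on (Dc N i) f" using fcont Dc_sub by (rule continuous_on_subset)

lemma null_pt: "measure lebesgue {x\<in>{0..1}. f x = c} = 0" "{x\<in>{0..1}. f x = c} \<in> lmeasurable"
proof -
  have "{x\<in>{0..1}. f x = c} \<in> sets lebesgue \<and> measure lebesgue {x\<in>{0..1}. f x = c} = 0"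
  proof (cases "c \<in> {0..1}")
    case True
    have A: "{c} \<in> sets lebesgue \<and> {c} \<subseteq> {0..1}" using True by auto
    have "{x\<in>{0..1}. f x \<in> {c}} \<in> sets lebesgue \<and> measure lebesgue {x\<in>{0..1}. f x \<in> {c}} = measure lebesgue {c}"
      using flp A unfolding lambda_preserving_def by blast
    then show ?thesis by simp
  next
    case False
    then have e: "{x\<in>{0..1}. f x = c} = {}" using fmaps by auto
    show ?thesis unfolding e by simp
  qed
  moreover have "{0..1::real} \<in> lmeasurable" by simp
  ultimately show "measure lebesgue {x\<in>{0..1}. f x = c} = 0" "{x\<in>{0..1}. f x = c} \<in> lmeasurable"
    by (auto intro: fmeasurableI2[of "{0..1}"])
qed

lemma img: assumes "i \<le> N" shows "f ` Dc N i = {cmin f N i .. dmax f N i}" "cmin f N i \<le> dmax f N i"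
proof -
  obtain c d where cd: "f ` {tpt N i..tpt N (Suc i)} = {c..d}" "c \<le> d"
    using continuous_image_closed_interval[OF tpt_mono Dc_cont[unfolded Dc_def]] by blast
  then have "cmin f N i = c" "dmax f N i = d" unfolding cmin_def dmax_def Dc_def by auto
  then show "f ` Dc N i = {cmin f N i .. dmax f N i}" "cmin f N i \<le> dmax f N i" using cd unfolding Dc_def by auto
qed

lemma fD: assumes "i \<le> N" "x \<in> Dc N i" shows "cmin f N i \<le> f x \<and> f x \<le> dmax f N i"
proof -
  have "f x \<in> f ` Dc N i" using assms(2) by (rule imageI)
  then show ?thesis unfolding img(1)[OF assms(1)] by simp
qed

lemma attain: assumes "i \<le> N" shows "\<exists>x\<in>Dc N i. f x = cmin f N i" "\<exists>x\<in>Dc N i. f x = dmax f N i"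
proof -
  have "cmin f N i \<in> f ` Dc N i" "dmax f N i \<in> f ` Dc N i" unfolding img(1)[OF assms] using img(2)[OF assms] by auto
  then show "\<exists>x\<in>Dc N i. f x = cmin f N i" "\<exists>x\<in>Dc N i. f x = dmax f N i" by (auto simp: image_iff)
qed

lemma cd_range: assumes "i \<le> N" shows "0 \<le> cmin f N i" "dmax f N i \<le> 1"
proof -
  obtain x y where "x \<in> Dc N i" "f x = cmin f N i" "y \<in> Dc N i" "f y = dmax f N i" using attain[OF assms] by blast
  then show "0 \<le> cmin f N i" "dmax f N i \<le> 1" using fmaps[of x] fmaps[of y] Dc_mem[of x i] Dc_mem[of y i] by auto
qed

lemma Dc_meas: "i \<le> N \<Longrightarrow> measure lebesgue (Dc N i) = tpt N (Suc i) - tpt N i"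
  unfolding Dc_def using tpt_mono by simp

lemma Pset: "{x\<in>Dc N i. f x \<le> v} \<in> lmeasurable"
  unfolding Dc_def by (rule lmeasurable_compact, rule set_closed_le) (use Dc_cont in \<open>auto simp: Dc_def\<close>)

lemma null_sub: assumes "S \<subseteq> {x\<in>{0..1}. f x = c}" "S \<in> sets lebesgue" shows "measure lebesgue S = 0"
proof -
  have "measure lebesgue S \<le> measure lebesgue {x\<in>{0..1}. f x = c}"
    by (rule measure_mono_fmeasurable[OF assms(1) assms(2) null_pt(2)])
  then show ?thesis using null_pt(1)[of c] measure_nonneg[of lebesgue S] by linarith
qed

lemma cmin_lt: assumes i: "i \<le> N" shows "cmin f N i < dmax f N i"
proof (rule ccontr)
  assume "\<not> cmin f N i < dmax f N i"
  then have eq: "\<And>x. x \<in> Dc N i \<Longrightarrow> f x = cmin f N i" using fD[OF i] by (meson antisym not_le order_trans)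
  have "measure lebesgue (Dc N i) = 0"
    by (rule null_sub[of _ "cmin f N i"]) (use eq Dc_mem in \<open>auto simp: Dc_def\<close>)
  then show False using Dc_meas[OF i] tpt_lt[OF i] by simp
qed

lemma Phi_mono: "v \<le> w \<Longrightarrow> Phi f N i v \<le> Phi f N i w"
  unfolding Phi_def by (rule measure_mono_fmeasurable[OF _ fmeasurableD[OF Pset] Pset]) auto

lemma Phi_nonneg: "0 \<le> Phi f N i v" unfolding Phi_def by (rule measure_nonneg)

lemma Phi_low: assumes i: "i \<le> N" and v: "v \<le> cmin f N i" shows "Phi f N i v = 0"
  unfolding Phi_def
proof (rule null_sub[of _ "cmin f N i"])
  show "{x \<in> Dc N i. f x \<le> v} \<subseteq> {x \<in> {0..1}. f x = cmin f N i}"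
  proof
    fix x assume x: "x \<in> {x \<in> Dc N i. f x \<le> v}"
    then have "f x = cmin f N i" using fD[OF i, of x] v by auto
    then show "x \<in> {x \<in> {0..1}. f x = cmin f N i}" using x Dc_mem[of x i] by auto
  qed
qed (use Pset in \<open>auto intro: fmeasurableD\<close>)

lemma Phi_high: assumes i: "i \<le> N" and v: "dmax f N i \<le> v" shows "Phi f N i v = tpt N (Suc i) - tpt N i"
proof -
  have "{x\<in>Dc N i. f x \<le> v} = Dc N i" using fD[OF i] v by (auto intro: order_trans)
  then show ?thesis unfolding Phi_def using Dc_meas[OF i] by simp
qed

lemma Mc_nonneg: "0 \<le> Mc f N i k"
  unfolding Mc_def using Phi_mono[of "real k / real N" "(real k + 1) / real N" i] N
  by (simp add: divide_right_mono)

lemma Mc_le: assumes i: "i \<le> N" shows "Mc f N i k \<le> tpt N (Suc i) - tpt N i"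
proof -
  have "Phi f N i ((real k + 1) / real N) \<le> Phi f N i (max 1 ((real k + 1) / real N))" by (rule Phi_mono) simp
  also have "\<dots> = tpt N (Suc i) - tpt N i" using cd_range[OF i] by (intro Phi_high[OF i]) auto
  finally show ?thesis unfolding Mc_def using Phi_nonneg[of i "real k / real N"] by linarith
qed

lemma lohi_facts: assumes i: "i \<le> N"
  shows "real (lof f N i) \<le> real N * cmin f N i" "real N * cmin f N i < real (lof f N i) + 1"
    "real N * dmax f N i \<le> real (Suc (hif f N i))" "real (Suc (hif f N i)) < real N * dmax f N i + 1"
    "Suc (hif f N i) \<le> N" "lof f N i \<le> hif f N i"
proof -
  have c0: "0 \<le> real N * cmin f N i" using cd_range[OF i] by simp
  have d0: "0 < real N * dmax f N i" using cd_range[OF i] cmin_lt[OF i] N by simp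
  have d1: "real N * dmax f N i \<le> real N" using cd_range[OF i] N by simp
  have lo_eq: "real (lof f N i) = of_int \<lfloor>real N * cmin f N i\<rfloor>" unfolding lof_def using c0 by simp
  have ce: "1 \<le> \<lceil>real N * dmax f N i\<rceil>" using d0 by linarith
  have hi_eq: "real (Suc (hif f N i)) = of_int \<lceil>real N * dmax f N i\<rceil>" unfolding hif_def using ce
    by (simp add: of_nat_diff)
  show "real (lof f N i) \<le> real N * cmin f N i" "real N * cmin f N i < real (lof f N i) + 1"
    unfolding lo_eq by linarith+
  show h1: "real N * dmax f N i \<le> real (Suc (hif f N i))" "real (Suc (hif f N i)) < real N * dmax f N i + 1"
    unfolding hi_eq by linarith+
  have "\<lceil>real N * dmax f N i\<rceil> \<le> int N" using d1 by (simp add: ceiling_le_iff)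
  then have "real (Suc (hif f N i)) \<le> real N" unfolding hi_eq by (metis of_int_le_iff of_int_of_nat_eq)
  then show "Suc (hif f N i) \<le> N" by simp
  have "real (lof f N i) < real (Suc (hif f N i))"
    using \<open>real (lof f N i) \<le> real N * cmin f N i\<close> h1(1) cmin_lt[OF i] N by (smt (verit) mult_strict_left_mono of_nat_0_less_iff)
  then show "lof f N i \<le> hif f N i" by simp
qed

lemma Mc_zero_low: assumes i: "i \<le> N" and k: "k < lof f N i" shows "Mc f N i k = 0"
proof -
  have "real k + 1 \<le> real (lof f N i)" using k by linarith
  then have "real k + 1 \<le> real N * cmin f N i" using lohi_facts(1)[OF i] by linarith
  then have a: "(real k + 1) / real N \<le> cmin f N i" using N by (simp add: field_simps)
  moreover have "real k / real N \<le> (real k + 1) / real N" using N by (simp add: divide_right_mono)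
  ultimately show ?thesis unfolding Mc_def using Phi_low[OF i] by simp
qed

lemma Mc_zero_high: assumes i: "i \<le> N" and k: "hif f N i < k" shows "Mc f N i k = 0"
proof -
  have "real (Suc (hif f N i)) \<le> real k" using k by simp
  then have "real N * dmax f N i \<le> real k" using lohi_facts(3)[OF i] by linarith
  then have a: "dmax f N i \<le> real k / real N" using N by (simp add: field_simps)
  moreover have "real k / real N \<le> (real k + 1) / real N" using N by (simp add: divide_right_mono)
  ultimately show ?thesis unfolding Mc_def using Phi_high[OF i] by simp
qed

lemma Mc_pos: assumes i: "i \<le> N" and k: "lof f N i \<le> k" "k \<le> hif f N i" shows "0 < Mc f N i k"
proof -
  define c where "c = cmin f N i"
  define d where "d = dmax f N i"
  define a where "a = max c (real k / real N)"
  define b where "b = min d ((real k + 1) / real N)"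
  have cd: "c < d" unfolding c_def d_def by (rule cmin_lt[OF i])
  have "real N * c < real k + 1" using lohi_facts(2)[OF i] k unfolding c_def by linarith
  then have cb: "c < (real k + 1) / real N" using N by (simp add: field_simps)
  have "real k < real N * d" using lohi_facts(4)[OF i] k unfolding d_def by linarith
  then have ad: "real k / real N < d" using N by (simp add: field_simps)
  have kk: "real k / real N < (real k + 1) / real N" using N by (simp add: divide_strict_right_mono)
  have ab: "a < b" unfolding a_def b_def using cd cb ad kk by auto
  define \<mu> where "\<mu> = (a + b) / 2"
  have mu: "a < \<mu>" "\<mu> < b" unfolding \<mu>_def using ab by auto
  have "\<mu> \<in> f ` Dc N i" unfolding img(1)[OF i] using mu unfolding a_def b_def c_def d_def by auto
  then obtain x1 where x1: "x1 \<in> Dc N i" "f x1 = \<mu>" by auto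
  have ba: "(b - a) / 2 > 0" using ab by simp
  have "\<exists>\<eta>>0. \<forall>x'\<in>Dc N i. dist x' x1 < \<eta> \<longrightarrow> dist (f x') (f x1) < (b - a) / 2"
    using Dc_cont[of i, unfolded continuous_on_iff, rule_format, OF x1(1) ba] .
  then obtain \<eta> where eta: "\<eta> > 0" "\<And>x'. x' \<in> Dc N i \<Longrightarrow> dist x' x1 < \<eta> \<Longrightarrow> dist (f x') \<mu> < (b - a) / 2"
    using x1(2) by auto
  define J where "J = {max (tpt N i) (x1 - \<eta>/2) .. min (tpt N (Suc i)) (x1 + \<eta>/2)}"
  have x1r: "tpt N i \<le> x1" "x1 \<le> tpt N (Suc i)" using x1(1) unfolding Dc_def by auto
  have Jlen: "0 < measure lebesgue J"
    unfolding J_def using tpt_lt[OF i] x1r eta(1) by (simp add: max_def min_def)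
  define S where "S = {x\<in>Dc N i. f x \<le> (real k + 1) / real N} - {x\<in>Dc N i. f x \<le> real k / real N}"
  have JS: "J \<subseteq> S"
  proof
    fix x assume x: "x \<in> J"
    then have xD: "x \<in> Dc N i" unfolding J_def Dc_def by auto
    have "dist x x1 < \<eta>" using x eta(1) unfolding J_def dist_real_def by auto
    then have "dist (f x) \<mu> < (b - a) / 2" using eta(2) xD by auto
    then have h: "\<bar>f x - \<mu>\<bar> < (b - a) / 2" by (simp add: dist_real_def)
    have hh: "f x - \<mu> < (b - a) / 2" "- (f x - \<mu>) < (b - a) / 2" using h abs_less_iff[of "f x - \<mu>" "(b - a) / 2"] by auto
    have "a < f x" "f x < b" using hh unfolding \<mu>_def by (simp_all add: field_simps)
    then show "x \<in> S" unfolding S_def a_def b_def using xD by auto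
  qed
  have sub: "{x\<in>Dc N i. f x \<le> real k / real N} \<subseteq> {x\<in>Dc N i. f x \<le> (real k + 1) / real N}"
    using kk by auto
  have "measure lebesgue S = Phi f N i ((real k + 1) / real N) - Phi f N i (real k / real N)"
    unfolding S_def Phi_def
  proof (rule measure_Diff[OF _ _ _ sub])
    show "emeasure lebesgue {x \<in> Dc N i. f x \<le> (real k + 1) / real N} \<noteq> \<infinity>"
      using fmeasurableD2[OF Pset[of i "(real k + 1) / real N"]] by simp
  qed (use Pset in \<open>auto intro: fmeasurableD\<close>)
  moreover have "measure lebesgue J \<le> measure lebesgue S"
    by (rule measure_mono_fmeasurable[OF JS]) (use Pset in \<open>auto simp: J_def S_def intro: fmeasurable_Diff\<close>)
  ultimately show ?thesis unfolding Mc_def using Jlen by linarith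
qed

lemma Mc_row: assumes i: "i \<le> N" shows "(\<Sum>k<N. Mc f N i k) = tpt N (Suc i) - tpt N i"
proof -
  have "(\<Sum>k<N. Mc f N i k) = (\<Sum>k<N. Phi f N i (real (Suc k) / real N) - Phi f N i (real k / real N))"
    unfolding Mc_def by (simp add: add.commute)
  also have "\<dots> = Phi f N i (real N / real N) - Phi f N i (real 0 / real N)"
    by (rule sum_lessThan_telescope)
  also have "\<dots> = tpt N (Suc i) - tpt N i"
    using N cd_range[OF i] Phi_high[OF i, of 1] Phi_low[OF i, of 0] by simp
  finally show ?thesis .
qed

lemma Phi_col: assumes v: "v \<in> {0..1}" shows "(\<Sum>i\<le>N. Phi f N i v) = v"
proof -
  have "measure lebesgue {x\<in>{tpt N 0..tpt N (Suc N)}. f x \<le> v} = (\<Sum>i<Suc N. measure lebesgue {x\<in>{tpt N i..tpt N (Suc i)}. f x \<le> v})"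
    by (rule chain_meas) (use tpt_mono fcont tpt0 tptN in auto)
  then have e1: "measure lebesgue {x\<in>{0..1}. f x \<le> v} = (\<Sum>i\<le>N. Phi f N i v)"
    unfolding Phi_def Dc_def tpt0 tptN lessThan_Suc_atMost .
  have A: "{0..v} \<in> sets lebesgue \<and> {0..v} \<subseteq> {0..1}" using v by auto
  have "measure lebesgue {x\<in>{0..1}. f x \<in> {0..v}} = measure lebesgue {0..v}"
    using flp A unfolding lambda_preserving_def by blast
  moreover have "{x\<in>{0..1}. f x \<in> {0..v}} = {x\<in>{0..1}. f x \<le> v}" using fmaps by auto
  ultimately show ?thesis using e1 v by simp
qed

lemma Mc_col: assumes k: "k < N" shows "(\<Sum>i\<le>N. Mc f N i k) = 1 / real N"
proof -
  have v1: "(real k + 1) / real N \<in> {0..1}" "real k / real N \<in> {0..1}" using k N by (auto simp: field_simps)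
  have "(\<Sum>i\<le>N. Mc f N i k) = (\<Sum>i\<le>N. Phi f N i ((real k + 1) / real N)) - (\<Sum>i\<le>N. Phi f N i (real k / real N))"
    unfolding Mc_def by (simp add: sum_subtractf)
  also have "\<dots> = (real k + 1) / real N - real k / real N" using Phi_col[OF v1(1)] Phi_col[OF v1(2)] by simp
  also have "\<dots> = 1 / real N" by (simp add: diff_divide_distrib[symmetric])
  finally show ?thesis .
qed

end

definition ci :: "nat \<Rightarrow> nat" where "ci j = (j + 1) div 2"
definition wt :: "nat \<Rightarrow> nat \<Rightarrow> real" where "wt N i = (if i = 0 \<or> i = N then 1 else 1/2)"
definition mj :: "(real \<Rightarrow> real) \<Rightarrow> nat \<Rightarrow> nat \<Rightarrow> nat \<Rightarrow> real" where
  "mj f N j k = Mc f N (ci j) k * wt N (ci j)"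
definition uj :: "(real \<Rightarrow> real) \<Rightarrow> nat \<Rightarrow> nat \<Rightarrow> nat" where
  "uj f N j = nat \<lfloor>real N * f (tpt N ((j + 2) div 2))\<rfloor>"
definition Hj :: "(real \<Rightarrow> real) \<Rightarrow> nat \<Rightarrow> nat \<Rightarrow> real \<Rightarrow> real" where
  "Hj f N j = H N (mj f N j) (lof f N (ci j)) (hif f N (ci j)) (uj f N j)"
definition x0 :: "nat \<Rightarrow> nat \<Rightarrow> real" where "x0 N j = real j / (2 * real N)"
definition Gj :: "(real \<Rightarrow> real) \<Rightarrow> nat \<Rightarrow> nat \<Rightarrow> real \<Rightarrow> real" where
  "Gj f N j x = (if odd j then Hj f N j (x - x0 N j) else Hj f N j (x0 N (Suc j) - x))"
definition gfun :: "(real \<Rightarrow> real) \<Rightarrow> nat \<Rightarrow> real \<Rightarrow> real" where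
  "gfun f N x = Gj f N (min (2 * N - 1) (nat \<lfloor>2 * real N * x\<rfloor>)) x"

lemma ci_le: "j < 2 * N \<Longrightarrow> ci j \<le> N" unfolding ci_def by linarith

lemma reidx_T:
  fixes F :: "nat \<Rightarrow> real"
  assumes n: "1 \<le> n"
  shows "(\<Sum>j<2*n. F (ci j) * (if ci j = 0 then 1 else 1/2)) = (\<Sum>i<n. F i) + F n / 2"
  using n
proof (induction n rule: dec_induct)
  case base
  have "(\<Sum>j<2. F (ci j) * (if ci j = 0 then 1 else 1/2)) = F (ci 0) * 1 + F (ci 1) * (1/2)"
    by (simp add: numeral_2_eq_2 ci_def)
  then show ?case by (simp add: ci_def)
next
  case (step n)
  have c1: "ci (2 * n) = n" "ci (Suc (2 * n)) = Suc n" unfolding ci_def by presburger+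
  have e: "2 * Suc n = Suc (Suc (2 * n))" by simp
  have "(\<Sum>j<2 * Suc n. F (ci j) * (if ci j = 0 then 1 else 1/2))
      = (\<Sum>j<2*n. F (ci j) * (if ci j = 0 then 1 else 1/2)) + F n / 2 + F (Suc n) / 2"
    unfolding e using c1 step.hyps by simp
  then show ?case using step.IH by simp
qed

lemma reidx:
  fixes F :: "nat \<Rightarrow> real"
  assumes n: "1 \<le> n"
  shows "(\<Sum>j<2*n. F (ci j) * wt n (ci j)) = (\<Sum>i\<le>n. F i)"
proof -
  have e: "2 * n = Suc (2 * n - 1)" using n by simp
  have cl: "ci j < n" if "j < 2 * n - 1" for j using that unfolding ci_def by linarith
  have cn: "ci (2 * n - 1) = n" "ci (2 * n - Suc 0) = n" unfolding ci_def using n by simp_all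
  have "(\<Sum>j<2*n. F (ci j) * wt n (ci j)) = (\<Sum>j<2*n - 1. F (ci j) * wt n (ci j)) + F n"
    by (subst e) (simp add: cn wt_def)
  also have "(\<Sum>j<2*n - 1. F (ci j) * wt n (ci j)) = (\<Sum>j<2*n - 1. F (ci j) * (if ci j = 0 then 1 else 1/2))"
    by (rule sum.cong) (use cl in \<open>auto simp: wt_def\<close>)
  also have "\<dots> = (\<Sum>j<2*n. F (ci j) * (if ci j = 0 then 1 else 1/2)) - F n / 2"
  proof -
    define Gf where "Gf j = F (ci j) * (if ci j = 0 then 1 else 1/2)" for j
    have s1: "(\<Sum>j<Suc (2*n - 1). Gf j) = (\<Sum>j<2*n - 1. Gf j) + Gf (2*n - 1)" by (rule sum.lessThan_Suc)
    have s2: "Gf (2*n - 1) = F n / 2" unfolding Gf_def cn using n by simp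
    have "(\<Sum>j<2*n. Gf j) = (\<Sum>j<2*n - 1. Gf j) + F n / 2" using s1 s2 e by metis
    then show ?thesis unfolding Gf_def by simp
  qed
  finally show ?thesis using reidx_T[OF n] n by (simp add: lessThan_Suc_atMost[symmetric])
qed

context dat begin

lemma x0_Suc: "x0 N (Suc j) = x0 N j + 1 / (2 * real N)"
  unfolding x0_def using N by (simp add: field_simps)

lemma unit_sub': assumes j: "j < 2 * N" shows "tpt N (ci j) \<le> x0 N j \<and> x0 N (Suc j) \<le> tpt N (Suc (ci j))"
proof -
  have "j = 2 * (j div 2) \<or> j = 2 * (j div 2) + 1" by presburger
  then obtain i where ji: "j = 2 * i \<or> j = 2 * i + 1" by blast
  then consider "j = 2 * i + 1" | "j = 2 * i" by blast
  then show ?thesis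
  proof cases
    case 1
    have c: "ci j = Suc i" using 1 unfolding ci_def by simp
    have iN: "Suc i \<le> N" using 1 j by linarith
    have t: "tpt N (Suc i) = (2 * real (Suc i) - 1) / (2 * real N)" by (rule tpt_mid) (use iN in auto)
    have x0j: "x0 N j = (2 * real (Suc i) - 1) / (2 * real N)" unfolding x0_def 1 by simp
    have A: "tpt N (ci j) \<le> x0 N j" unfolding c t x0j by simp
    have x0s: "x0 N (Suc j) = (2 * real i + 2) / (2 * real N)" unfolding x0_def 1 by simp
    have "x0 N (Suc j) \<le> tpt N (Suc (ci j))"
    proof (cases "Suc (Suc i) \<le> N")
      case a: True
      have t2: "tpt N (Suc (Suc i)) = (2 * real (Suc (Suc i)) - 1) / (2 * real N)" by (rule tpt_mid) (use a in auto)
      show ?thesis unfolding c t2 x0s using N by (intro divide_right_mono) auto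
    next
      case b: False
      then have "Suc (Suc i) = Suc N" using iN by simp
      then have t2: "tpt N (Suc (Suc i)) = 1" using tptN by simp
      have "2 * real i + 2 \<le> 2 * real N" using iN by simp
      then show ?thesis unfolding c t2 x0s using N by (simp add: divide_le_eq)
    qed
    then show ?thesis using A by simp
  next
    case 2
    have c: "ci j = i" using 2 unfolding ci_def by simp
    have iN: "i < N" using 2 j by linarith
    have x0j: "x0 N j = (2 * real i) / (2 * real N)" unfolding x0_def 2 by simp
    have A: "tpt N (ci j) \<le> x0 N j"
    proof (cases "i = 0")
      case a: True then show ?thesis unfolding c x0j using tpt0 by simp
    next
      case b: False
      have t: "tpt N i = (2 * real i - 1) / (2 * real N)" by (rule tpt_mid) (use b iN in auto)
      show ?thesis unfolding c t x0j using N by (intro divide_right_mono) auto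
    qed
    have t: "tpt N (Suc i) = (2 * real (Suc i) - 1) / (2 * real N)" by (rule tpt_mid) (use iN in auto)
    have x0s: "x0 N (Suc j) = (2 * real i + 1) / (2 * real N)" unfolding x0_def 2 by simp
    have "x0 N (Suc j) \<le> tpt N (Suc (ci j))" unfolding c t x0s by (simp add: algebra_simps)
    then show ?thesis using A by simp
  qed
qed

lemma unit_sub: assumes j: "j < 2 * N" shows "tpt N (ci j) \<le> x0 N j" "x0 N (Suc j) \<le> tpt N (Suc (ci j))"
  using unit_sub'[OF j] by auto

lemma unit_in_Dc: "j < 2 * N \<Longrightarrow> x \<in> {x0 N j..x0 N (Suc j)} \<Longrightarrow> x \<in> Dc N (ci j)"
  using unit_sub[of j] unfolding Dc_def by auto

lemma uj_pt: assumes j: "j < 2 * N" shows "tpt N ((j + 2) div 2) \<in> Dc N (ci j)"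
proof (cases "odd j")
  case True
  then have "(j + 2) div 2 = ci j" unfolding ci_def by presburger
  then show ?thesis unfolding Dc_def using tpt_mono by simp
next
  case False
  then have "(j + 2) div 2 = Suc (ci j)" unfolding ci_def by presburger
  then show ?thesis unfolding Dc_def using tpt_mono by simp
qed

lemma wt_len: assumes i: "i \<le> N" shows "(tpt N (Suc i) - tpt N i) * wt N i = 1 / (2 * real N)"
  using tpt_len[OF i] unfolding wt_def by auto

lemma walk_j: assumes j: "j < 2 * N" shows "walk N (mj f N j) (lof f N (ci j)) (hif f N (ci j)) (uj f N j)"
proof -
  have i: "ci j \<le> N" using ci_le[OF j] .
  define x where "x = tpt N ((j + 2) div 2)"
  have xD: "x \<in> Dc N (ci j)" unfolding x_def by (rule uj_pt[OF j])
  have fx: "cmin f N (ci j) \<le> f x" "f x \<le> dmax f N (ci j)" using fD[OF i xD] by auto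
  have c0: "0 \<le> cmin f N (ci j)" using cd_range[OF i] by simp
  have "lof f N (ci j) \<le> uj f N j" unfolding lof_def uj_def x_def[symmetric]
    using fx c0 N by (intro nat_mono floor_mono mult_left_mono) auto
  moreover have "uj f N j \<le> Suc (hif f N (ci j))"
  proof -
    have nn: "0 \<le> real N * f x" using fx c0 by simp
    have "real (uj f N j) \<le> real N * f x" unfolding uj_def x_def[symmetric] using nn by simp
    also have "\<dots> \<le> real N * dmax f N (ci j)" using fx by (simp add: mult_left_mono)
    also have "\<dots> \<le> real (Suc (hif f N (ci j)))" by (rule lohi_facts(3)[OF i])
    finally show ?thesis by (simp only: of_nat_le_iff)
  qed
  moreover have "0 < mj f N j k" if "lof f N (ci j) \<le> k" "k \<le> hif f N (ci j)" for k
    unfolding mj_def using Mc_pos[OF i that] by (auto simp: wt_def)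
  moreover have "mj f N j k \<le> 1 / (2 * real N)" for k
  proof -
    have "mj f N j k \<le> (tpt N (Suc (ci j)) - tpt N (ci j)) * wt N (ci j)"
      unfolding mj_def by (rule mult_right_mono[OF Mc_le[OF i]]) (auto simp: wt_def)
    then show ?thesis using wt_len[OF i] by simp
  qed
  ultimately show ?thesis using N lohi_facts(5,6)[OF i] by unfold_locales auto
qed

lemma sum_mj: assumes j: "j < 2 * N"
  shows "(\<Sum>k\<in>{lof f N (ci j)..<Suc (hif f N (ci j))}. mj f N j k * F k) = (\<Sum>k<N. mj f N j k * F k)"
proof (rule sum.mono_neutral_left)
  have i: "ci j \<le> N" using ci_le[OF j] .
  show "{lof f N (ci j)..<Suc (hif f N (ci j))} \<subseteq> {..<N}" using lohi_facts(5)[OF i] by auto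
  show "\<forall>k\<in>{..<N} - {lof f N (ci j)..<Suc (hif f N (ci j))}. mj f N j k * F k = 0"
    using Mc_zero_low[OF i] Mc_zero_high[OF i] unfolding mj_def by auto
qed simp

lemma hh_j: assumes j: "j < 2 * N"
  shows "L1 (mj f N j) (lof f N (ci j)) (uj f N j) + L2 (mj f N j) (lof f N (ci j)) (hif f N (ci j)) (uj f N j)
     + L3 (mj f N j) (lof f N (ci j)) (hif f N (ci j)) = 1 / (2 * real N)"
proof -
  have i: "ci j \<le> N" using ci_le[OF j] .
  have "L1 (mj f N j) (lof f N (ci j)) (uj f N j) + L2 (mj f N j) (lof f N (ci j)) (hif f N (ci j)) (uj f N j)
     + L3 (mj f N j) (lof f N (ci j)) (hif f N (ci j)) = (\<Sum>k\<in>{lof f N (ci j)..<Suc (hif f N (ci j))}. mj f N j k)"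
    by (rule walk.total[OF walk_j[OF j]])
  also have "\<dots> = (\<Sum>k<N. mj f N j k * 1)" using sum_mj[OF j, of "\<lambda>_. 1"] by simp
  also have "\<dots> = (\<Sum>k<N. Mc f N (ci j) k) * wt N (ci j)" unfolding mj_def by (simp add: sum_distrib_right)
  also have "\<dots> = 1 / (2 * real N)" using Mc_row[OF i] wt_len[OF i] by simp
  finally show ?thesis .
qed

lemma Gj_vals: assumes j: "j < 2 * N"
  shows "Gj f N j (x0 N j) = (if odd j then real (uj f N j) / real N else real (lof f N (ci j)) / real N)"
    "Gj f N j (x0 N (Suc j)) = (if odd j then real (lof f N (ci j)) / real N else real (uj f N j) / real N)"
proof -
  interpret W: walk N "mj f N j" "lof f N (ci j)" "hif f N (ci j)" "uj f N j" by (rule walk_j[OF j])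
  have d: "x0 N (Suc j) - x0 N j = 1 / (2 * real N)" using x0_Suc by simp
  show "Gj f N j (x0 N j) = (if odd j then real (uj f N j) / real N else real (lof f N (ci j)) / real N)"
    unfolding Gj_def Hj_def using W.H0 W.Hh hh_j[OF j] d by auto
  show "Gj f N j (x0 N (Suc j)) = (if odd j then real (lof f N (ci j)) / real N else real (uj f N j) / real N)"
    unfolding Gj_def Hj_def using W.H0 W.Hh hh_j[OF j] d by auto
qed

lemma junction: assumes j: "Suc j < 2 * N" shows "Gj f N j (x0 N (Suc j)) = Gj f N (Suc j) (x0 N (Suc j))"
proof (cases "odd j")
  case True
  have "ci (Suc j) = ci j" unfolding ci_def using True by presburger
  then show ?thesis using Gj_vals[of j] Gj_vals[of "Suc j"] j True by auto
next
  case False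
  have "uj f N (Suc j) = uj f N j" unfolding uj_def using False by (metis add_2_eq_Suc' div2_Suc_Suc even_Suc_div_two odd_Suc_div_two add_Suc_right)
  then show ?thesis using Gj_vals[of j] Gj_vals[of "Suc j"] j False by auto
qed

lemma gfun_unit: assumes j: "j < 2 * N" and x: "x \<in> {x0 N j..x0 N (Suc j)}" shows "gfun f N x = Gj f N j x"
proof -
  have xx: "real j \<le> 2 * real N * x" "2 * real N * x \<le> real j + 1"
    using x N unfolding x0_def by (auto simp: field_simps)
  show ?thesis
  proof (cases "2 * real N * x < real j + 1")
    case lt: True
    have "\<lfloor>2 * real N * x\<rfloor> = int j" using xx lt by linarith
    then have "min (2 * N - 1) (nat \<lfloor>2 * real N * x\<rfloor>) = j" using j by simp
    then show ?thesis unfolding gfun_def by simp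
  next
    case ge: False
    then have e: "2 * real N * x = real j + 1" using xx by simp
    then have fl: "nat \<lfloor>2 * real N * x\<rfloor> = Suc j" by simp
    have xe: "x = x0 N (Suc j)" using e N unfolding x0_def by (simp add: field_simps)
    show ?thesis
    proof (cases "Suc j < 2 * N")
      case a: True
      then have "min (2 * N - 1) (nat \<lfloor>2 * real N * x\<rfloor>) = Suc j" using fl by simp
      then show ?thesis unfolding gfun_def using junction[OF a] xe by simp
    next
      case b: False
      then have "min (2 * N - 1) (nat \<lfloor>2 * real N * x\<rfloor>) = j" using fl j by simp
      then show ?thesis unfolding gfun_def by simp
    qed
  qed
qed

lemma unit_j: assumes j: "j < 2 * N"
  shows "continuous_on {x0 N j..x0 N (Suc j)} (gfun f N)"
    and "\<And>x. x \<in> {x0 N j..x0 N (Suc j)} \<Longrightarrow> real (lof f N (ci j)) / real N \<le> gfun f N x \<and> gfun f N x \<le> real (Suc (hif f N (ci j))) / real N"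
    and "measure lebesgue {x\<in>{x0 N j..x0 N (Suc j)}. gfun f N x \<le> a} = (\<Sum>k<N. mj f N j k * cl (real N * a - real k))"
    and "\<exists>\<gamma>>0. unit_legs (gfun f N) N (x0 N j) (x0 N (Suc j)) \<gamma>"
    and "odd j \<Longrightarrow> s \<in> {0..L3 (mj f N j) (lof f N (ci j)) (hif f N (ci j))} \<Longrightarrow>
         gfun f N (x0 N (Suc j) - s) = psi N (c3 (mj f N j)) (lof f N (ci j)) (Suc (hif f N (ci j))) s"
    and "even j \<Longrightarrow> s \<in> {0..L3 (mj f N j) (lof f N (ci j)) (hif f N (ci j))} \<Longrightarrow>
         gfun f N (x0 N j + s) = psi N (c3 (mj f N j)) (lof f N (ci j)) (Suc (hif f N (ci j))) s"
proof -
  interpret W: walk N "mj f N j" "lof f N (ci j)" "hif f N (ci j)" "uj f N j" by (rule walk_j[OF j])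
  define hh where "hh = L1 (mj f N j) (lof f N (ci j)) (uj f N j) + L2 (mj f N j) (lof f N (ci j)) (hif f N (ci j)) (uj f N j)
     + L3 (mj f N j) (lof f N (ci j)) (hif f N (ci j))"
  have hx: "x0 N (Suc j) = x0 N j + hh" unfolding hh_def hh_j[OF j] x0_Suc ..
  define \<gamma> where "\<gamma> = (if 0 < L1 (mj f N j) (lof f N (ci j)) (uj f N j)
      then min (L1 (mj f N j) (lof f N (ci j)) (uj f N j)) (min (L2 (mj f N j) (lof f N (ci j)) (hif f N (ci j)) (uj f N j)) (L3 (mj f N j) (lof f N (ci j)) (hif f N (ci j))))
      else min (L2 (mj f N j) (lof f N (ci j)) (hif f N (ci j)) (uj f N j)) (L3 (mj f N j) (lof f N (ci j)) (hif f N (ci j))))"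
  have gpos: "0 < \<gamma>" unfolding \<gamma>_def using W.l2_pos W.l3_pos by auto
  have sum_eq: "(\<Sum>k\<in>{lof f N (ci j)..<Suc (hif f N (ci j))}. mj f N j k * cl (real N * a - real k)) = (\<Sum>k<N. mj f N j k * cl (real N * a - real k))"
    by (rule sum_mj[OF j])
  have all: "continuous_on {x0 N j..x0 N (Suc j)} (gfun f N) \<and>
    (\<forall>x\<in>{x0 N j..x0 N (Suc j)}. real (lof f N (ci j)) / real N \<le> gfun f N x \<and> gfun f N x \<le> real (Suc (hif f N (ci j))) / real N) \<and>
    measure lebesgue {x\<in>{x0 N j..x0 N (Suc j)}. gfun f N x \<le> a} = (\<Sum>k<N. mj f N j k * cl (real N * a - real k)) \<and>
    unit_legs (gfun f N) N (x0 N j) (x0 N (Suc j)) \<gamma>"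
  proof (cases "odd j")
    case True
    have G: "gfun f N x = H N (mj f N j) (lof f N (ci j)) (hif f N (ci j)) (uj f N j) (x - x0 N j)"
      if "x \<in> {x0 N j..x0 N j + hh}" for x
      using gfun_unit[OF j, of x] that True unfolding hx Gj_def Hj_def by simp
    note U = W.unit_left[of "x0 N j" "gfun f N", OF G[unfolded hh_def], folded hh_def \<gamma>_def, folded hx]
    show ?thesis using U(1,2,3,6) sum_eq by auto
  next
    case False
    have G: "gfun f N x = H N (mj f N j) (lof f N (ci j)) (hif f N (ci j)) (uj f N j) (x0 N j + hh - x)"
      if "x \<in> {x0 N j..x0 N j + hh}" for x
      using gfun_unit[OF j, of x] that False unfolding hx Gj_def Hj_def by simp
    note U = W.unit_right[of "x0 N j" "gfun f N", OF G[unfolded hh_def], folded hh_def \<gamma>_def, folded hx]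
    show ?thesis using U(1,2,3,6) sum_eq by auto
  qed
  then show "continuous_on {x0 N j..x0 N (Suc j)} (gfun f N)"
    "\<And>x. x \<in> {x0 N j..x0 N (Suc j)} \<Longrightarrow> real (lof f N (ci j)) / real N \<le> gfun f N x \<and> gfun f N x \<le> real (Suc (hif f N (ci j))) / real N"
    "measure lebesgue {x\<in>{x0 N j..x0 N (Suc j)}. gfun f N x \<le> a} = (\<Sum>k<N. mj f N j k * cl (real N * a - real k))"
    "\<exists>\<gamma>>0. unit_legs (gfun f N) N (x0 N j) (x0 N (Suc j)) \<gamma>" using gpos by blast+
  show "odd j \<Longrightarrow> s \<in> {0..L3 (mj f N j) (lof f N (ci j)) (hif f N (ci j))} \<Longrightarrow>
         gfun f N (x0 N (Suc j) - s) = psi N (c3 (mj f N j)) (lof f N (ci j)) (Suc (hif f N (ci j))) s"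
  proof -
    assume o: "odd j" and sr: "s \<in> {0..L3 (mj f N j) (lof f N (ci j)) (hif f N (ci j))}"
    have G: "gfun f N x = H N (mj f N j) (lof f N (ci j)) (hif f N (ci j)) (uj f N j) (x - x0 N j)"
      if "x \<in> {x0 N j..x0 N j + hh}" for x
      using gfun_unit[OF j, of x] that o unfolding hx Gj_def Hj_def by simp
    note U = W.unit_left[of "x0 N j" "gfun f N", OF G[unfolded hh_def], folded hh_def, folded hx]
    show ?thesis using U(7) sr by blast
  qed
  show "even j \<Longrightarrow> s \<in> {0..L3 (mj f N j) (lof f N (ci j)) (hif f N (ci j))} \<Longrightarrow>
         gfun f N (x0 N j + s) = psi N (c3 (mj f N j)) (lof f N (ci j)) (Suc (hif f N (ci j))) s"
  proof -
    assume o: "even j" and sr: "s \<in> {0..L3 (mj f N j) (lof f N (ci j)) (hif f N (ci j))}"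
    have G: "gfun f N x = H N (mj f N j) (lof f N (ci j)) (hif f N (ci j)) (uj f N j) (x0 N j + hh - x)"
      if "x \<in> {x0 N j..x0 N j + hh}" for x
      using gfun_unit[OF j, of x] that o unfolding hx Gj_def Hj_def by simp
    note U = W.unit_right[of "x0 N j" "gfun f N", OF G[unfolded hh_def], folded hh_def, folded hx]
    show ?thesis using U(7) sr by blast
  qed
qed

lemma x0_0: "x0 N 0 = 0" unfolding x0_def by simp
lemma x0_2N: "x0 N (2 * N) = 1" unfolding x0_def using N by simp

lemma cover: assumes x: "x \<in> {0..1}" shows "\<exists>j<2 * N. x \<in> {x0 N j..x0 N (Suc j)}"
proof -
  define j where "j = min (2 * N - 1) (nat \<lfloor>2 * real N * x\<rfloor>)"
  have j: "j < 2 * N" unfolding j_def using N by simp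
  have nn: "0 \<le> 2 * real N * x" using x by simp
  have "real j \<le> real (nat \<lfloor>2 * real N * x\<rfloor>)" unfolding j_def by simp
  also have "\<dots> \<le> 2 * real N * x" using nn by simp
  finally have "real j \<le> 2 * real N * x" .
  moreover have "2 * real N * x \<le> real j + 1"
  proof (cases "nat \<lfloor>2 * real N * x\<rfloor> \<le> 2 * N - 1")
    case a: True
    then have "j = nat \<lfloor>2 * real N * x\<rfloor>" unfolding j_def by simp
    then show ?thesis using nn by linarith
  next
    case b: False
    then have "j = 2 * N - 1" unfolding j_def by simp
    then have "real j + 1 = 2 * real N" using N by (simp add: of_nat_diff)
    moreover have "2 * real N * x \<le> 2 * real N" using x N by simp
    ultimately show ?thesis by simp
  qed
  ultimately have "x \<in> {x0 N j..x0 N (Suc j)}" unfolding x0_def using N by (auto simp: field_simps)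
  then show ?thesis using j by blast
qed

lemma units_union: "(\<Union>j\<in>{..<2*N}. {x0 N j..x0 N (Suc j)}) = {0..1}"
proof
  show "(\<Union>j\<in>{..<2*N}. {x0 N j..x0 N (Suc j)}) \<subseteq> {0..1}"
  proof
    fix x assume "x \<in> (\<Union>j\<in>{..<2*N}. {x0 N j..x0 N (Suc j)})"
    then obtain j where j: "j < 2 * N" "x \<in> {x0 N j..x0 N (Suc j)}" by auto
    then have "x \<in> Dc N (ci j)" by (rule unit_in_Dc)
    then show "x \<in> {0..1}" using Dc_mem by auto
  qed
  show "{0..1} \<subseteq> (\<Union>j\<in>{..<2*N}. {x0 N j..x0 N (Suc j)})"
  proof
    fix x assume "x \<in> {0..1::real}"
    then obtain j where "j < 2 * N" "x \<in> {x0 N j..x0 N (Suc j)}" using cover by blast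
    then show "x \<in> (\<Union>j\<in>{..<2*N}. {x0 N j..x0 N (Suc j)})" by blast
  qed
qed

lemma gfun_cont: "continuous_on {0..1} (gfun f N)"
proof -
  have "continuous_on (\<Union>j\<in>{..<2*N}. {x0 N j..x0 N (Suc j)}) (gfun f N)"
    by (rule continuous_on_closed_Union) (use unit_j(1) in auto)
  then show ?thesis unfolding units_union .
qed

lemma gfun_maps: assumes x: "x \<in> {0..1}" shows "gfun f N x \<in> {0..1}"
proof -
  obtain j where j: "j < 2 * N" "x \<in> {x0 N j..x0 N (Suc j)}" using cover[OF x] by blast
  have i: "ci j \<le> N" using ci_le[OF j(1)] .
  have "real (Suc (hif f N (ci j))) / real N \<le> 1" using lohi_facts(5)[OF i] N by (simp add: divide_le_eq)
  moreover have z: "0 \<le> real (lof f N (ci j)) / real N" by simp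
  moreover have r: "real (lof f N (ci j)) / real N \<le> gfun f N x" "gfun f N x \<le> real (Suc (hif f N (ci j))) / real N"
    using unit_j(2)[OF j] by auto
  ultimately have "0 \<le> gfun f N x" "gfun f N x \<le> 1" by linarith+
  then show ?thesis by simp
qed

lemma gfun_cdf: assumes a: "a \<in> {0..1}" shows "measure lebesgue {x\<in>{0..1}. gfun f N x \<le> a} = a"
proof -
  have "measure lebesgue {x\<in>{x0 N 0..x0 N (2*N)}. gfun f N x \<le> a} = (\<Sum>j<2*N. measure lebesgue {x\<in>{x0 N j..x0 N (Suc j)}. gfun f N x \<le> a})"
    by (rule chain_meas) (use gfun_cont x0_0 x0_2N x0_Suc N in auto)
  also have "\<dots> = (\<Sum>j<2*N. \<Sum>k<N. mj f N j k * cl (real N * a - real k))"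
    by (rule sum.cong) (use unit_j(3) in auto)
  also have "\<dots> = (\<Sum>k<N. \<Sum>j<2*N. mj f N j k * cl (real N * a - real k))" by (rule sum.swap)
  also have "\<dots> = (\<Sum>k<N. cl (real N * a - real k) * (\<Sum>j<2*N. mj f N j k))"
    by (simp add: sum_distrib_left mult.commute)
  also have "\<dots> = (\<Sum>k<N. cl (real N * a - real k) * (1 / real N))"
  proof (rule sum.cong)
    fix k assume k: "k \<in> {..<N}"
    have "(\<Sum>j<2*N. mj f N j k) = (\<Sum>i\<le>N. Mc f N i k)"
      unfolding mj_def by (rule reidx[of N "\<lambda>i. Mc f N i k"]) (use N in auto)
    then show "cl (real N * a - real k) * (\<Sum>j<2*N. mj f N j k) = cl (real N * a - real k) * (1 / real N)"
      using Mc_col[of k] k by simp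
  qed simp
  also have "\<dots> = (\<Sum>k\<in>{0..<N}. cl (real N * a - real k)) / real N"
    by (simp add: sum_divide_distrib atLeast0LessThan)
  also have "\<dots> = a" using cl_sum[of 0 N "real N * a"] a N by (simp add: max_def min_def)
  finally show ?thesis unfolding x0_0 x0_2N .
qed

lemma unit_legs_mono: "unit_legs G M a b \<gamma> \<Longrightarrow> \<gamma>' \<le> \<gamma> \<Longrightarrow> unit_legs G M a b \<gamma>'"
  unfolding unit_legs_def by (meson order_trans)

lemma gfun_legs: "\<exists>\<gamma>>0. legs_ok (gfun f N) N \<gamma>"
proof -
  have "\<forall>j\<in>{..<2*N}. \<exists>\<gamma>. \<gamma> > 0 \<and> unit_legs (gfun f N) N (x0 N j) (x0 N (Suc j)) \<gamma>"
    using unit_j(4) by auto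
  then obtain \<Gamma> where G: "\<forall>j\<in>{..<2*N}. \<Gamma> j > 0 \<and> unit_legs (gfun f N) N (x0 N j) (x0 N (Suc j)) (\<Gamma> j)"
    by (metis bchoice)
  define \<gamma> where "\<gamma> = Min (\<Gamma> ` {..<2*N})"
  have z: "0 \<in> {..<2*N}" using N by simp
  have ne: "\<Gamma> ` {..<2*N} \<noteq> {}" using z by blast
  have gpos: "0 < \<gamma>" unfolding \<gamma>_def using G ne by (subst Min_gr_iff) auto
  have gle: "\<gamma> \<le> \<Gamma> j" if "j < 2 * N" for j unfolding \<gamma>_def using that by (intro Min_le) auto
  have "legs_ok (gfun f N) N \<gamma>" unfolding legs_ok_def
  proof
    fix y :: real assume y: "y \<in> {0..1}"
    obtain j where j: "j < 2 * N" "y \<in> {x0 N j..x0 N (Suc j)}" using cover[OF y] by blast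
    have "unit_legs (gfun f N) N (x0 N j) (x0 N (Suc j)) \<gamma>"
      using unit_legs_mono G gle j(1) by blast
    then obtain a b where ab: "x0 N j \<le> a" "a \<le> y" "y \<le> b" "b \<le> x0 N (Suc j)" "\<gamma> \<le> b - a"
      "gridpt N (gfun f N a)" "gridpt N (gfun f N b)" "continuous_on {a..b} (gfun f N)" "monoexp (gfun f N) a b"
      using j(2) unfolding unit_legs_def by blast
    have "x0 N j \<in> Dc N (ci j)" "x0 N (Suc j) \<in> Dc N (ci j)" using unit_in_Dc[OF j(1)] x0_Suc N by auto
    then have "0 \<le> x0 N j" "x0 N (Suc j) \<le> 1" using Dc_mem by blast+
    then show "\<exists>a b. 0 \<le> a \<and> a \<le> y \<and> y \<le> b \<and> b \<le> 1 \<and> \<gamma> \<le> b - a \<and>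
      gridpt N (gfun f N a) \<and> gridpt N (gfun f N b) \<and> continuous_on {a..b} (gfun f N) \<and>
      ((\<forall>s t. a \<le> s \<longrightarrow> s \<le> t \<longrightarrow> t \<le> b \<longrightarrow> gfun f N s \<le> gfun f N t \<and> 2 * (t - s) \<le> gfun f N t - gfun f N s) \<or>
       (\<forall>s t. a \<le> s \<longrightarrow> s \<le> t \<longrightarrow> t \<le> b \<longrightarrow> gfun f N t \<le> gfun f N s \<and> 2 * (t - s) \<le> gfun f N s - gfun f N t))"
      using ab unfolding monoexp_def by (intro exI[of _ a] exI[of _ b]) auto
  qed
  then show ?thesis using gpos by blast
qed

abbreviation "L3j j \<equiv> L3 (mj f N j) (lof f N (ci j)) (hif f N (ci j))"

lemma L3j_bounds: assumes j: "j < 2 * N" shows "0 < L3j j" "L3j j \<le> 1 / (2 * real N)"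
proof -
  interpret W: walk N "mj f N j" "lof f N (ci j)" "hif f N (ci j)" "uj f N j" by (rule walk_j[OF j])
  show "0 < L3j j" by (rule W.l3_pos)
  show "L3j j \<le> 1 / (2 * real N)" using hh_j[OF j] W.l1_nonneg W.l2_pos by linarith
qed

lemma gfun_fold: "\<exists>w>0. fold_ok (gfun f N) N w"
proof -
  define w where "w = Min (L3j ` {..<2*N})"
  have z: "0 \<in> {..<2*N}" using N by simp
  have ne: "L3j ` {..<2*N} \<noteq> {}" using z by blast
  have wpos: "0 < w" unfolding w_def using ne L3j_bounds(1) by (subst Min_gr_iff) auto
  have wle: "w \<le> L3j j" if "j < 2 * N" for j unfolding w_def using that by (intro Min_le) auto
  have "fold_ok (gfun f N) N w" unfolding fold_ok_def
  proof (intro allI impI ballI)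
    fix k x assume k: "0 < k \<and> k < N" and x: "x \<in> {0..1}" and xk: "\<bar>x - real k / real N\<bar> \<le> w"
    define j1 where "j1 = 2 * k - 1"
    define j2 where "j2 = 2 * k"
    have j1: "j1 < 2 * N" "odd j1" "Suc j1 = j2" unfolding j1_def j2_def using k by auto
    have j2: "j2 < 2 * N" "even j2" unfolding j2_def using k by auto
    have cij: "ci j1 = k" "ci j2 = k" unfolding ci_def j1_def j2_def using k by auto
    have mjeq: "mj f N j1 = mj f N j2" unfolding mj_def[abs_def] cij ..
    have L3eq: "L3j j1 = L3j j2" unfolding mjeq cij ..
    have xk0: "x0 N j2 = real k / real N" unfolding x0_def j2_def using N by simp
    have wl: "w \<le> L3j j2" using wle[OF j2(1)] .
    have lb: "L3j j2 \<le> 1 / (2 * real N)" using L3j_bounds(2)[OF j2(1)] .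
    have kr: "1 \<le> real k" "real k + 1 \<le> real N" using k by auto
    have rng: "2 * (real k / real N) - x \<in> {0..1}"
    proof -
      have "\<bar>x - real k / real N\<bar> \<le> 1 / (2 * real N)" using xk wl lb by linarith
      moreover have "1 / (2 * real N) \<le> real k / real N" "real k / real N + 1 / (2 * real N) \<le> 1"
        using kr N by (auto simp: field_simps)
      ultimately show ?thesis by (auto simp: abs_le_iff)
    qed
    have eq: "gfun f N (2 * (real k / real N) - x) = gfun f N x"
    proof (cases "x \<le> real k / real N")
      case a: True
      define s where "s = real k / real N - x"
      have s: "s \<in> {0..L3j j1}" unfolding s_def using a xk wl L3eq by (auto simp: abs_le_iff)
      have "gfun f N x = gfun f N (x0 N (Suc j1) - s)" unfolding s_def j1(3) xk0 by simp
      also have "\<dots> = psi N (c3 (mj f N j1)) (lof f N (ci j1)) (Suc (hif f N (ci j1))) s"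
        by (rule unit_j(5)[OF j1(1) j1(2) s])
      also have "\<dots> = gfun f N (x0 N j2 + s)"
        using unit_j(6)[OF j2(1) j2(2), of s] s L3eq unfolding mjeq cij by simp
      also have "x0 N j2 + s = 2 * (real k / real N) - x" unfolding xk0 s_def by simp
      finally show ?thesis by simp
    next
      case b: False
      define s where "s = x - real k / real N"
      have s: "s \<in> {0..L3j j2}" unfolding s_def using b xk wl by (auto simp: abs_le_iff)
      have "gfun f N x = gfun f N (x0 N j2 + s)" unfolding s_def xk0 by simp
      also have "\<dots> = psi N (c3 (mj f N j2)) (lof f N (ci j2)) (Suc (hif f N (ci j2))) s"
        by (rule unit_j(6)[OF j2(1) j2(2) s])
      also have "\<dots> = gfun f N (x0 N (Suc j1) - s)"
        using unit_j(5)[OF j1(1) j1(2), of s] s L3eq unfolding mjeq cij by simp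
      also have "x0 N (Suc j1) - s = 2 * (real k / real N) - x" unfolding j1(3) xk0 s_def by simp
      finally show ?thesis by simp
    qed
    show "2 * (real k / real N) - x \<in> {0..1} \<and> gfun f N (2 * (real k / real N) - x) = gfun f N x"
      using rng eq by simp
  qed
  then show ?thesis using wpos by blast
qed

lemma gfun_close:
  assumes uc: "\<And>x y. x \<in> {0..1} \<Longrightarrow> y \<in> {0..1} \<Longrightarrow> \<bar>x - y\<bar> \<le> 1 / real N \<Longrightarrow> \<bar>f x - f y\<bar> \<le> \<eta>"
  shows "\<And>x. x \<in> {0..1} \<Longrightarrow> \<bar>gfun f N x - f x\<bar> \<le> \<eta> + 1 / real N"
proof -
  fix x :: real assume x: "x \<in> {0..1}"
  obtain j where j: "j < 2 * N" "x \<in> {x0 N j..x0 N (Suc j)}" using cover[OF x] by blast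
  define i where "i = ci j"
  have i: "i \<le> N" unfolding i_def using ci_le[OF j(1)] .
  have xD: "x \<in> Dc N i" unfolding i_def using unit_in_Dc[OF j] .
  have fx: "cmin f N i \<le> f x" "f x \<le> dmax f N i" using fD[OF i xD] by auto
  have gx: "real (lof f N i) / real N \<le> gfun f N x" "gfun f N x \<le> real (Suc (hif f N i)) / real N"
    using unit_j(2)[OF j] unfolding i_def by auto
  have "(real N * cmin f N i - 1) / real N < real (lof f N i) / real N"
    using lohi_facts(2)[OF i] N by (intro divide_strict_right_mono) auto
  moreover have "(real N * cmin f N i - 1) / real N = cmin f N i - 1 / real N" using N by (simp add: field_simps)
  ultimately have lo: "cmin f N i - 1 / real N < real (lof f N i) / real N" by simp
  have "real (Suc (hif f N i)) / real N < (real N * dmax f N i + 1) / real N"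
    using lohi_facts(4)[OF i] N by (intro divide_strict_right_mono) auto
  moreover have "(real N * dmax f N i + 1) / real N = dmax f N i + 1 / real N" using N by (simp add: field_simps)
  ultimately have hi: "real (Suc (hif f N i)) / real N < dmax f N i + 1 / real N" by simp
  obtain x1 x2 where x12: "x1 \<in> Dc N i" "f x1 = cmin f N i" "x2 \<in> Dc N i" "f x2 = dmax f N i"
    using attain[OF i] by blast
  have len: "\<bar>x2 - x1\<bar> \<le> 1 / real N"
  proof -
    have "\<bar>x2 - x1\<bar> \<le> tpt N (Suc i) - tpt N i" using x12 unfolding Dc_def by (auto simp: abs_le_iff)
    also have "\<dots> \<le> 1 / real N" using tpt_len[OF i] N by (auto simp: field_simps)
    finally show ?thesis .
  qed
  have "x1 \<in> {0..1}" "x2 \<in> {0..1}" using Dc_mem x12(1,3) by auto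
  then have "\<bar>f x2 - f x1\<bar> \<le> \<eta>" using uc[OF _ _ len] by blast
  then have "dmax f N i - cmin f N i \<le> \<eta>" using x12 by simp
  then show "\<bar>gfun f N x - f x\<bar> \<le> \<eta> + 1 / real N" using fx gx lo hi by (auto simp: abs_le_iff)
qed

end

theorem mainTheorem9:
  shows "\<forall>f\<in>C_lambda. \<forall>\<epsilon>>0. \<exists>g\<in>LS_lambda. unif_dist f g < \<epsilon>"
proof (intro ballI allI impI)
  fix f :: "real \<Rightarrow> real" and \<epsilon> :: real
  assume fC: "f \<in> C_lambda" and \<epsilon>: "\<epsilon> > 0"
  have fcont: "continuous_on {0..1} f" using fC unfolding C_lambda_def by auto
  have "uniformly_continuous_on {0..1} f" by (rule compact_uniformly_continuous[OF fcont compact_Icc])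
  moreover have e4: "\<epsilon> / 4 > 0" using \<epsilon> by simp
  ultimately obtain \<delta> where \<delta>: "\<delta> > 0" "\<And>x x'. x \<in> {0..1} \<Longrightarrow> x' \<in> {0..1} \<Longrightarrow> dist x' x < \<delta> \<Longrightarrow> dist (f x') (f x) < \<epsilon> / 4"
    unfolding uniformly_continuous_on_def by metis
  obtain N where NN: "N > 0" "inverse (real N) < min \<delta> (\<epsilon> / 4)"
    using ex_inverse_of_nat_less[of "min \<delta> (\<epsilon> / 4)"] \<delta>(1) e4 by auto
  interpret dat f N by unfold_locales (use fC NN in auto)
  define g where "g = gfun f N"
  have gC: "g \<in> C_lambda"
    unfolding C_lambda_def g_def
    using gfun_cont gfun_maps lp_from_cdf[OF gfun_cont gfun_maps gfun_cdf] by auto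
  obtain \<gamma> where \<gamma>: "\<gamma> > 0" "legs_ok (gfun f N) N \<gamma>" using gfun_legs by blast
  obtain w where w: "w > 0" "fold_ok (gfun f N) N w" using gfun_fold by blast
  have gS: "s_limit_shadowing g" unfolding g_def
    by (rule shadowing_thm[OF gfun_cont NN(1) gfun_maps \<gamma>(2) w(2) \<gamma>(1) w(1)])
  have Ni: "inverse (real N) < \<delta>" "inverse (real N) < \<epsilon> / 4" using NN(2) by auto
  have Ninv: "1 / real N < \<delta>" "1 / real N < \<epsilon> / 4" using Ni by (simp_all add: inverse_eq_divide)
  have uc: "\<bar>f x - f y\<bar> \<le> \<epsilon> / 4" if "x \<in> {0..1}" "y \<in> {0..1}" "\<bar>x - y\<bar> \<le> 1 / real N" for x y
  proof -
    have "dist x y < \<delta>" using that Ninv by (simp add: dist_real_def)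
    then have "dist (f x) (f y) < \<epsilon> / 4" using \<delta>(2)[OF that(2,1)] by simp
    then show ?thesis by (simp add: dist_real_def)
  qed
  have cl: "\<bar>f x - g x\<bar> \<le> \<epsilon> / 2" if "x \<in> {0..1}" for x
  proof -
    have "\<bar>gfun f N x - f x\<bar> \<le> \<epsilon> / 4 + 1 / real N" by (rule gfun_close[OF uc that])
    then show ?thesis using Ninv unfolding g_def by (simp add: abs_minus_commute)
  qed
  have "unif_dist f g \<le> \<epsilon> / 2" unfolding unif_dist_def
    by (rule cSUP_least) (use cl in auto)
  then have "unif_dist f g < \<epsilon>" using \<epsilon> by simp
  moreover have "g \<in> LS_lambda" unfolding LS_lambda_def using gC gS by simp
  ultimately show "\<exists>g\<in>LS_lambda. unif_dist f g < \<epsilon>" by blast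
qed

end
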